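(* There exists $C>0$ such that for all $g^{[1]},g^{[2]},g^{[3]},g^{[4]}\in G$, $$\|P_{g^{[1]},g^{[2]}}-P_{g^{[3]},g^{[4]}}\|_{H^1}\le C\big(|g^{[1]}-g^{[3]}|+|g^{[2]}-g^{[4]}|\big).$$ Moreover there exists $y_{\min}>0$ such that if $y_0\ge y_{\min}$ and $g^{[k]}=(y^{[k]},\phi^{[k]})$ satisfy $y^{[1]},y^{[3]}\ge y_0$ and $y^{[2]},y^{[4]}\le-y_0$, then $$\|g^{[1]}.w_*^+-g^{[3]}.w_*^+\|^2_{H^1}+\|g^{[2]}.w_*^--g^{[4]}.w_*^-\|^2_{H^1}\le\|P_{g^{[1]},g^{[2]}}-P_{g^{[3]},g^{[4]}}\|^2_{H^1}+Cy_0e^{-2\Gamma y_0}.$$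
   Context: $\gamma\in(-1,1)$, $\Gamma=\sqrt{1-\gamma^2}$, $e_1=(1,0,0)$. $G=\mathbb R\times\mathbb R/2\pi\mathbb Z$ acts on $w:\mathbb R\to\mathbb R^3$ by $(y,\phi).w:=R_\phi w(\cdot-y)$ ($R_\phi$ rotation of angle $\phi$ about $e_1$); $G$ is an additive group with $|(y,\phi)|:=|y|+\mathrm{dist}(\phi,2\pi\mathbb Z)$. $\theta_*(x)=2\arctan(e^{-\Gamma x})$, $w_*^\sigma(x)=(\cos\theta_*(\sigma_1x),\sigma_2\sin\theta_*(\sigma_1x)\cos(\gamma x),\sigma_1\sigma_2\sin\theta_*(\sigma_1x)\sin(\gamma x))$; $w_*^+:=w_*^{(1,\sigma_2)}$, $w_*^-:=w_*^{(-1,\sigma_2')}$ for fixed $\sigma_2,\sigma_2'\in\{\pm1\}$. $P_{g^+,g^-}:=g^+.w_*^++g^-.w_*^-+e_1$. $H^1=H^1(\mathbb R,\mathbb R^3)$. *)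

theory Defs
  imports "HOL-Analysis.Analysis"
begin

definition Gam :: "real \<Rightarrow> real" where
  "Gam \<gamma> = sqrt (1 - \<gamma>\<^sup>2)"

definition theta_star :: "real \<Rightarrow> real \<Rightarrow> real" where
  "theta_star \<gamma> x = 2 * arctan (exp (- Gam \<gamma> * x))"

text \<open>w_*^sigma with sigma = (s1, s2), s1, s2 in {-1, 1}\<close>
definition w_star :: "real \<Rightarrow> real \<Rightarrow> real \<Rightarrow> real \<Rightarrow> real^3" where
  "w_star \<gamma> s1 s2 x = vector
     [cos (theta_star \<gamma> (s1 * x)),
      s2 * sin (theta_star \<gamma> (s1 * x)) * cos (\<gamma> * x),
      s1 * s2 * sin (theta_star \<gamma> (s1 * x)) * sin (\<gamma> * x)]"

definition e1 :: "real^3" where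
  "e1 = vector [1, 0, 0]"

definition rot :: "real \<Rightarrow> real^3 \<Rightarrow> real^3" where
  "rot \<phi> v = vector [v$1, cos \<phi> * v$2 - sin \<phi> * v$3, sin \<phi> * v$2 + cos \<phi> * v$3]"

text \<open>Group G = R x R/2piZ, elements represented by pairs (y, phi) of reals;
  the action and the norm are 2pi-periodic in phi.\<close>
definition act :: "real \<times> real \<Rightarrow> (real \<Rightarrow> real^3) \<Rightarrow> (real \<Rightarrow> real^3)" where
  "act g w = (\<lambda>x. rot (snd g) (w (x - fst g)))"

definition gnorm :: "real \<times> real \<Rightarrow> real" where
  "gnorm g = \<bar>fst g\<bar> + infdist (snd g) (range (\<lambda>k::int. 2 * pi * of_int k))"

text \<open>P_{g+,g-} = g+.w_*^+ + g-.w_*^- + e1, with w_*^+ = w_*^{(1,s2)}, w_*^- = w_*^{(-1,s2')}\<close>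
definition P :: "real \<Rightarrow> real \<Rightarrow> real \<Rightarrow> real \<times> real \<Rightarrow> real \<times> real \<Rightarrow> real \<Rightarrow> real^3" where
  "P \<gamma> s2 s2' gp gm = (\<lambda>x. act gp (w_star \<gamma> 1 s2) x + act gm (w_star \<gamma> (-1) s2') x + e1)"

text \<open>H^1(R,R^3) norm (for the smooth, exponentially decaying functions considered here
  the classical derivative is the weak derivative).\<close>
definition H1norm :: "(real \<Rightarrow> real^3) \<Rightarrow> real" where
  "H1norm f = sqrt (\<integral>x. (norm (f x))\<^sup>2 + (norm (vector_derivative f (at x)))\<^sup>2 \<partial>lborel)"

end

theory Submission
  imports Defs
begin

definition Sf :: "real \<Rightarrow> real \<Rightarrow> real" where "Sf G z = 1 / cosh (G * z)"
definition Tf :: "real \<Rightarrow> real \<Rightarrow> real" where "Tf G z = tanh (G * z)"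

lemma Sf_pos: "Sf G z > 0" by (simp add: Sf_def)
lemma Sf_le1: "Sf G z \<le> 1" using cosh_real_ge_1[of "G*z"] by (simp add: Sf_def)
lemma Tf_Sf: "(Tf G z)^2 + (Sf G z)^2 = 1"
proof -
  have c: "cosh (G*z) \<noteq> 0" by simp
  have "(cosh (G*z))^2 = (sinh (G*z))^2 + 1" by (simp add: cosh_square_eq)
  have "(Tf G z)^2 + (Sf G z)^2 = (sinh (G*z))^2 / (cosh (G*z))^2 + 1 / (cosh (G*z))^2"
    by (simp add: Tf_def Sf_def tanh_def power_divide)
  also have "\<dots> = ((sinh (G*z))^2 + 1) / (cosh (G*z))^2"
    by (simp add: add_divide_distrib)
  also have "\<dots> = (cosh (G*z))^2 / (cosh (G*z))^2" using \<open>(cosh (G*z))^2 = (sinh (G*z))^2 + 1\<close> by simp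
  also have "\<dots> = 1" using c by simp
  finally show ?thesis .
qed
lemma Tf_abs: "\<bar>Tf G z\<bar> \<le> 1"
proof -
  have "(Tf G z)^2 \<le> 1" using Tf_Sf[of G z] by (metis le_add_same_cancel1 zero_le_power2)
  then show ?thesis by (simp add: abs_square_le_1)
qed

lemma DSf: "((Sf G) has_real_derivative (- G * Tf G z * Sf G z)) (at z)"
  unfolding Sf_def Tf_def tanh_def
  by (auto intro!: derivative_eq_intros simp: field_simps power2_eq_square)

lemma DTf: "((Tf G) has_real_derivative (G * (Sf G z)^2)) (at z)"
proof -
  have "((\<lambda>z. tanh (G*z)) has_real_derivative (1 - (tanh (G*z))^2) * G) (at z)"
    by (rule has_field_derivative_tanh) (auto intro!: derivative_eq_intros)
  moreover have "1 - (tanh (G*z))^2 = (Sf G z)^2" using Tf_Sf[of G z] by (simp add: Tf_def)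
  ultimately show ?thesis by (simp add: Tf_def[abs_def] mult.commute)
qed

lemmas DSf_chain[derivative_intros] = DSf[THEN DERIV_chain2]
lemmas DTf_chain[derivative_intros] = DTf[THEN DERIV_chain2]

lemma Sf_exp: assumes "G \<ge> 0" shows "Sf G z \<le> 2 * exp (- G * \<bar>z\<bar>)"
proof -
  have "cosh (G*z) = cosh (G*\<bar>z\<bar>)" using assms
    by (metis abs_mult abs_of_nonneg cosh_real_abs)
  also have "\<dots> = (exp (G*\<bar>z\<bar>) + exp (-(G*\<bar>z\<bar>)))/2" by (simp add: cosh_def)
  finally have c: "cosh (G*z) \<ge> exp (G*\<bar>z\<bar>)/2" by simp
  have "Sf G z \<le> 1 / (exp (G*\<bar>z\<bar>)/2)" unfolding Sf_def
    by (rule divide_left_mono[OF c]) auto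
  also have "\<dots> = 2 * exp (- G * \<bar>z\<bar>)" by (simp add: exp_minus field_simps)
  finally show ?thesis .
qed

lemma Tf_pos_bound: assumes "G \<ge> 0" "z \<ge> 0" shows "\<bar>Tf G z - 1\<bar> \<le> 2 * exp (-2 * G * \<bar>z\<bar>)"
proof -
  define E where "E = exp (-2*(G*z))"
  have E: "E > 0" by (simp add: E_def)
  have "Tf G z = (1 - E)/(1+E)" by (simp add: Tf_def tanh_real_altdef E_def)
  hence "Tf G z - 1 = - (2*E/(1+E))" using E by (simp add: field_simps)
  hence "\<bar>Tf G z - 1\<bar> = 2*E/(1+E)" using E by simp
  also have "\<dots> \<le> 2*E" using E by (simp add: field_simps)
  finally show ?thesis using assms by (simp add: E_def mult.assoc)
qed

lemma Tf_neg_bound: assumes "G \<ge> 0" "z \<le> 0" shows "\<bar>Tf G z + 1\<bar> \<le> 2 * exp (-2 * G * \<bar>z\<bar>)"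
proof -
  have "Tf G z = - Tf G (-z)" by (simp add: Tf_def)
  moreover have "\<bar>Tf G (-z) - 1\<bar> \<le> 2 * exp (-2 * G * \<bar>-z\<bar>)" using assms by (intro Tf_pos_bound) auto
  ultimately show ?thesis by simp
qed

lemma cos2arctan: "cos (2 * arctan t) = (1 - t^2)/(1+t^2)"
proof -
  have p: "1 + t^2 > 0" by (simp add: add_pos_nonneg)
  have "cos (2 * arctan t) = (cos (arctan t))^2 - (sin (arctan t))^2" by (rule cos_double)
  also have "\<dots> = 1/(1+t^2) - t^2/(1+t^2)" by (simp add: cos_arctan sin_arctan power_divide)
  finally show ?thesis using p by (simp add: diff_divide_distrib)
qed
lemma sin2arctan: "sin (2 * arctan t) = 2*t/(1+t^2)"
proof -
  have p: "1 + t^2 > 0" by (simp add: add_pos_nonneg)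
  have "sin (2 * arctan t) = 2 * sin (arctan t) * cos (arctan t)" by (simp add: sin_double)
  also have "\<dots> = 2*t/(sqrt (1+t^2))^2" by (simp add: sin_arctan cos_arctan power2_eq_square)
  finally show ?thesis using p by simp
qed

lemma cos_theta: "cos (theta_star \<gamma> z) = Tf (Gam \<gamma>) z"
proof -
  have e: "(exp (- Gam \<gamma> * z))^2 = exp (- 2 * (Gam \<gamma> * z))" by (simp add: exp_add[symmetric] power2_eq_square)
  show ?thesis unfolding theta_star_def cos2arctan Tf_def tanh_real_altdef e by simp
qed

lemma sin_theta: "sin (theta_star \<gamma> z) = Sf (Gam \<gamma>) z"
proof -
  have e: "(exp (- Gam \<gamma> * z))^2 = exp (- Gam \<gamma> * z) * exp (- Gam \<gamma> * z)" by (simp add: power2_eq_square)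
  have "exp (- Gam \<gamma> * z) * exp (Gam \<gamma> * z) = 1" by (simp add: exp_add[symmetric])
  then show ?thesis unfolding theta_star_def sin2arctan Sf_def cosh_def e
    by (simp add: field_simps exp_minus)
qed


definition "w1 G a z = a * Tf G z"
definition "w2 G b c ph z = b * Sf G z * cos (c*z+ph)"
definition "w3 G b c ph z = b * Sf G z * sin (c*z+ph)"
definition "v1 G a z = a*G*(Sf G z)^2"
definition "v2 G b c ph z = b*(-G*Tf G z*Sf G z* cos (c*z+ph) - c*Sf G z* sin (c*z+ph))"
definition "v3 G b c ph z = b*(-G*Tf G z*Sf G z* sin (c*z+ph) + c*Sf G z* cos (c*z+ph))"
definition "u1 G a z = -2*a*G^2*Tf G z*(Sf G z)^2"
definition "u2 G b c ph z = b*Sf G z*((G^2*((Tf G z)^2-(Sf G z)^2) - c^2)* cos (c*z+ph) + 2*G*c*Tf G z* sin (c*z+ph))"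
definition "u3 G b c ph z = b*Sf G z*((G^2*((Tf G z)^2-(Sf G z)^2) - c^2)* sin (c*z+ph) - 2*G*c*Tf G z* cos (c*z+ph))"

lemma Dw1: "(w1 G a has_real_derivative v1 G a z) (at z)"
  unfolding w1_def[abs_def] v1_def by (auto intro!: derivative_eq_intros)
lemma Dw2: "(w2 G b c ph has_real_derivative v2 G b c ph z) (at z)"
  unfolding w2_def[abs_def] v2_def by (auto intro!: derivative_eq_intros simp: algebra_simps)
lemma Dw3: "(w3 G b c ph has_real_derivative v3 G b c ph z) (at z)"
  unfolding w3_def[abs_def] v3_def by (auto intro!: derivative_eq_intros simp: algebra_simps)
lemma Dv1: "(v1 G a has_real_derivative u1 G a z) (at z)"
  unfolding v1_def[abs_def] u1_def by (auto intro!: derivative_eq_intros simp: algebra_simps power2_eq_square)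
lemma Dv2: "(v2 G b c ph has_real_derivative u2 G b c ph z) (at z)"
  unfolding v2_def[abs_def] u2_def by (auto intro!: derivative_eq_intros simp: algebra_simps power2_eq_square)
lemma Dv3: "(v3 G b c ph has_real_derivative u3 G b c ph z) (at z)"
  unfolding v3_def[abs_def] u3_def by (auto intro!: derivative_eq_intros simp: algebra_simps power2_eq_square)

lemma vec3_decomp: "(vector [p, q, r] :: real^3) = p *\<^sub>R vector [1,0,0] + q *\<^sub>R vector [0,1,0] + r *\<^sub>R vector [0,0,1]"
  by (simp add: vec_eq_iff forall_3)

lemma vec3_deriv:
  assumes "(f1 has_real_derivative d1) (at x)" "(f2 has_real_derivative d2) (at x)" "(f3 has_real_derivative d3) (at x)"
  shows "((\<lambda>x. vector [f1 x, f2 x, f3 x] :: real^3) has_vector_derivative vector [d1, d2, d3]) (at x)"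
proof -
  have h: "((\<lambda>x. f x *\<^sub>R v) has_vector_derivative d *\<^sub>R v) (at x)"
    if "(f has_real_derivative d) (at x)" for f d and v :: "real^3"
    using has_vector_derivative_scaleR[OF that has_vector_derivative_const[of v]] by simp
  have "((\<lambda>x. f1 x *\<^sub>R vector [1,0,0] + f2 x *\<^sub>R vector [0,1,0] + f3 x *\<^sub>R (vector [0,0,1]::real^3))
     has_vector_derivative d1 *\<^sub>R vector [1,0,0] + d2 *\<^sub>R vector [0,1,0] + d3 *\<^sub>R vector [0,0,1]) (at x)"
    by (intro has_vector_derivative_add h assms)
  then show ?thesis by (simp only: vec3_decomp[symmetric])
qed

lemma shift_deriv: "(f has_real_derivative D) (at (x - y)) \<Longrightarrow> ((\<lambda>x. f (x - y)) has_real_derivative D) (at x)"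
proof -
  assume a: "(f has_real_derivative D) (at (x - y))"
  have "((\<lambda>x. x - y) has_real_derivative 1) (at x)" by (auto intro!: derivative_eq_intros)
  from DERIV_chain2[OF a this] show ?thesis by simp
qed

definition "U G a b c y ph x = (vector [w1 G a (x-y), w2 G b c ph (x-y), w3 G b c ph (x-y)] :: real^3)"
definition "dU G a b c y ph x = (vector [v1 G a (x-y), v2 G b c ph (x-y), v3 G b c ph (x-y)] :: real^3)"
definition "ddU G a b c y ph x = (vector [u1 G a (x-y), u2 G b c ph (x-y), u3 G b c ph (x-y)] :: real^3)"

lemma U_deriv: "(U G a b c y ph has_vector_derivative dU G a b c y ph x) (at x)"
  unfolding U_def[abs_def] dU_def
  by (intro vec3_deriv shift_deriv Dw1 Dw2 Dw3)
lemma dU_deriv: "(dU G a b c y ph has_vector_derivative ddU G a b c y ph x) (at x)"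
  unfolding dU_def[abs_def] ddU_def
  by (intro vec3_deriv shift_deriv Dv1 Dv2 Dv3)

lemma U_cont: "continuous_on S (U G a b c y ph)"
  by (meson U_deriv continuous_at_imp_continuous_on has_vector_derivative_continuous)
lemma dU_cont: "continuous_on S (dU G a b c y ph)"
  by (meson dU_deriv continuous_at_imp_continuous_on has_vector_derivative_continuous)

lemma norm3: "(norm (v::real^3))^2 = (v$1)^2 + (v$2)^2 + (v$3)^2"
  by (simp add: norm_vec_def L2_set_def sum_3)
lemma inner3: "inner (v::real^3) w = v$1*w$1 + v$2*w$2 + v$3*w$3"
  by (simp add: inner_vec_def sum_3)

lemma Tf_neg: "Tf G (-z) = - Tf G z" by (simp add: Tf_def)
lemma Sf_neg: "Sf G (-z) = Sf G z" by (simp add: Sf_def)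

lemma rot_wp: "rot ph (w_star \<gamma> 1 s2 z) = vector [w1 (Gam \<gamma>) 1 z, w2 (Gam \<gamma>) s2 \<gamma> ph z, w3 (Gam \<gamma>) s2 \<gamma> ph z]"
  by (simp add: rot_def w_star_def w1_def w2_def w3_def cos_theta sin_theta cos_add sin_add algebra_simps)
lemma rot_wm: "rot ph (w_star \<gamma> (-1) s2 z) = vector [w1 (Gam \<gamma>) (-1) z, w2 (Gam \<gamma>) s2 (-\<gamma>) ph z, w3 (Gam \<gamma>) s2 (-\<gamma>) ph z]"
  by (simp add: rot_def w_star_def w1_def w2_def w3_def cos_theta sin_theta cos_add sin_add algebra_simps Tf_neg Sf_neg cos_diff sin_diff)

lemma act_plus: "act g (w_star \<gamma> 1 s2) = U (Gam \<gamma>) 1 s2 \<gamma> (fst g) (snd g)"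
  by (rule ext) (simp add: act_def U_def rot_wp)
lemma act_minus: "act g (w_star \<gamma> (-1) s2) = U (Gam \<gamma>) (-1) s2 (-\<gamma>) (fst g) (snd g)"
  by (rule ext) (simp add: act_def U_def rot_wm)


lemma dom_int:
  fixes f g :: "real \<Rightarrow> real"
  assumes "integrable lborel g" "continuous_on UNIV f" "\<And>x. \<bar>f x\<bar> \<le> g x"
  shows "integrable lborel f" "integral\<^sup>L lborel f \<le> integral\<^sup>L lborel g"
proof -
  have m: "f \<in> borel_measurable lborel" using borel_measurable_continuous_onI[OF assms(2)] by simp
  have "\<And>x. g x \<ge> 0" using assms(3) by (meson abs_ge_zero order_trans)
  then show i: "integrable lborel f"
    using assms by (intro Bochner_Integration.integrable_bound[OF assms(1) m]) auto
  show "integral\<^sup>L lborel f \<le> integral\<^sup>L lborel g"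
    using assms i by (intro integral_mono) (auto simp: abs_le_iff)
qed

lemma exp_half_int:
  fixes c :: real
  assumes c: "c > 0"
  shows "has_bochner_integral lborel (\<lambda>x. if x \<in> {0..} then exp (- c * x) else 0) (1/c)"
proof -
  let ?f = "\<lambda>x::real. if x \<in> {0..} then exp (- c * x) else 0"
  have "((\<lambda>x. exp (- c * x)) has_integral exp (-c*0)/c) {0..}"
    using has_integral_exp_minus_to_infinity[OF c, of 0] by simp
  then have hi: "(?f has_integral 1/c) UNIV"
    by (subst has_integral_restrict_UNIV) simp
  have m: "?f \<in> borel_measurable borel" by measurable
  have nn: "\<And>x. 0 \<le> ?f x" by simp
  have "integral\<^sup>N lborel ?f = 1/c"
    using nn_integral_has_integral_lborel[OF m nn hi] .
  then show ?thesis
    using c m by (intro has_bochner_integral_nn_integral) auto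
qed

lemma exp_abs_int:
  fixes c y :: real
  assumes c: "c > 0"
  shows "integrable lborel (\<lambda>x. exp (- c * \<bar>x - y\<bar>))"
        "integral\<^sup>L lborel (\<lambda>x. exp (- c * \<bar>x - y\<bar>)) \<le> 2 / c"
proof -
  define f where "f = (\<lambda>x::real. if x \<in> {0..} then exp (- c * x) else 0)"
  have hf: "has_bochner_integral lborel f (1/c)" unfolding f_def by (rule exp_half_int[OF c])
  then have fi: "integrable lborel f" and fI: "integral\<^sup>L lborel f = 1/c"
    by (auto simp: has_bochner_integral_iff)
  have i1: "integrable lborel (\<lambda>x. f (-y + 1 * x))"
    by (rule lborel_integrable_real_affine[OF fi]) simp
  have e1: "integral\<^sup>L lborel (\<lambda>x. f (-y + 1 * x)) = 1/c"
    using lborel_integral_real_affine[of 1 f "-y"] fI by simp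
  have i2: "integrable lborel (\<lambda>x. f (y + (-1) * x))"
    by (rule lborel_integrable_real_affine[OF fi]) simp
  have e2: "integral\<^sup>L lborel (\<lambda>x. f (y + (-1) * x)) = 1/c"
    using lborel_integral_real_affine[of "-1" f "y"] fI by simp
  let ?g = "\<lambda>x. f (-y + 1 * x) + f (y + (-1) * x)"
  have gi: "integrable lborel ?g" using i1 i2 by simp
  have gI: "integral\<^sup>L lborel ?g = 2/c" using i1 i2 e1 e2 by simp
  have b: "\<bar>exp (- c * \<bar>x - y\<bar>)\<bar> \<le> ?g x" for x
    by (cases "x \<ge> y") (auto simp: f_def add_nonneg_nonneg)
  have ct: "continuous_on UNIV (\<lambda>x. exp (- c * \<bar>x - y\<bar>))" by (intro continuous_intros)
  show "integrable lborel (\<lambda>x. exp (- c * \<bar>x - y\<bar>))" using dom_int[OF gi ct b] by simp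
  show "integral\<^sup>L lborel (\<lambda>x. exp (- c * \<bar>x - y\<bar>)) \<le> 2 / c" using dom_int[OF gi ct b] gI by simp
qed

lemma ind_int:
  assumes "l \<le> u"
  shows "integrable lborel (indicator {l..u} :: real \<Rightarrow> real)"
        "integral\<^sup>L lborel (indicator {l..u} :: real \<Rightarrow> real) = u - l"
  using assms by (auto simp: integrable_indicator_iff)


lemma ang_le_k: "2 - 2 * cos (\<psi>::real) \<le> (\<psi> - 2 * pi * of_int (k::int))^2"
proof -
  let ?t = "\<psi> - 2 * pi * of_int k"
  have "cos ?t = cos \<psi>" by (simp add: cos_diff)
  moreover have "cos ?t = cos (2 * (?t/2))" by (rule arg_cong[where f=cos]) simp
  moreover have "cos (2 * (?t/2)) = 1 - 2 * (sin (?t/2))^2" by (rule cos_double_sin)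
  moreover have "(sin (?t/2))^2 \<le> (?t/2)^2"
    using abs_sin_x_le_abs_x[of "?t/2"] by (metis abs_le_square_iff)
  ultimately show ?thesis by (simp add: power_divide)
qed

lemma ang_le: "2 - 2 * cos (\<psi>::real) \<le> (infdist \<psi> (range (\<lambda>k::int. 2 * pi * of_int k)))^2"
proof -
  have ne: "range (\<lambda>k::int. 2 * pi * of_int k) \<noteq> {}" by simp
  have "sqrt (2 - 2 * cos \<psi>) \<le> infdist \<psi> (range (\<lambda>k::int. 2 * pi * of_int k))"
    unfolding infdist_notempty[OF ne]
  proof (rule cINF_greatest)
    show "range (\<lambda>k::int. 2 * pi * of_int k) \<noteq> {}" by simp
    fix a assume "a \<in> range (\<lambda>k::int. 2 * pi * of_int k)"
    then obtain k :: int where a: "a = 2 * pi * of_int k" by auto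
    have "sqrt (2 - 2 * cos \<psi>) \<le> sqrt ((\<psi> - a)^2)" unfolding a
      by (rule real_sqrt_le_mono[OF ang_le_k])
    then show "sqrt (2 - 2 * cos \<psi>) \<le> dist \<psi> a" by (simp add: dist_real_def)
  qed
  moreover have "0 \<le> 2 - 2 * cos \<psi>" by (simp add: cos_le_one)
  ultimately show ?thesis
    by (metis real_sqrt_ge_zero real_sqrt_pow2 power_mono)
qed


definition J :: "real \<Rightarrow> real \<Rightarrow> real \<Rightarrow> real \<Rightarrow> real \<Rightarrow> nat \<Rightarrow> real \<Rightarrow> real" where
 "J G a b c p k z = (if k = 0 then w1 G a z else if k = 1 then w2 G b c p z else if k = 2 then w3 G b c p z
     else if k = 3 then v1 G a z else if k = 4 then v2 G b c p z else v3 G b c p z)"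
definition J' :: "real \<Rightarrow> real \<Rightarrow> real \<Rightarrow> real \<Rightarrow> real \<Rightarrow> nat \<Rightarrow> real \<Rightarrow> real" where
 "J' G a b c p k z = (if k = 0 then v1 G a z else if k = 1 then v2 G b c p z else if k = 2 then v3 G b c p z
     else if k = 3 then u1 G a z else if k = 4 then u2 G b c p z else u3 G b c p z)"

lemma J_deriv: "(J G a b c p k has_real_derivative J' G a b c p k z) (at z)"
proof -
  have "J G a b c p k = (if k = 0 then w1 G a else if k = 1 then w2 G b c p else if k = 2 then w3 G b c p
     else if k = 3 then v1 G a else if k = 4 then v2 G b c p else v3 G b c p)"
    by (rule ext) (simp add: J_def)
  then show ?thesis by (simp add: J'_def Dw1 Dw2 Dw3 Dv1 Dv2 Dv3)
qed

lemma sum6: "(\<Sum>k<(6::nat). f k) = f 0 + f 1 + f 2 + f 3 + f 4 + (f 5 :: real)"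
  by (simp add: eval_nat_numeral)

lemma FA_eq: "(norm (U G a b c y p x - U G a b c y' p' x))^2 + (norm (dU G a b c y p x - dU G a b c y' p' x))^2
   = (\<Sum>k<6. (J G a b c p k (x-y) - J G a b c p' k (x-y'))^2)"
  by (simp add: norm3 U_def dU_def J_def sum6)

lemma X_eq: "inner (U G a b c y p x - U G a b c y' p' x) (U G a2 b2 c2 y2 p2 x - U G a2 b2 c2 y2' p2' x)
   + inner (dU G a b c y p x - dU G a b c y' p' x) (dU G a2 b2 c2 y2 p2 x - dU G a2 b2 c2 y2' p2' x)
   = (\<Sum>k<6. (J G a b c p k (x-y) - J G a b c p' k (x-y')) * (J G a2 b2 c2 p2 k (x-y2) - J G a2 b2 c2 p2' k (x-y2')))"
  by (simp add: inner3 U_def dU_def J_def sum6)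

lemma J0: "J G a b c p 0 z = a * Tf G z" by (simp add: J_def w1_def)
lemma J3_indep: "J G a b c p 3 z = J G a b c q 3 z" by (simp add: J_def)

lemma mono3: "\<bar>x::real\<bar> \<le> 1 \<Longrightarrow> \<bar>y\<bar> \<le> 1 \<Longrightarrow> \<bar>x * y\<bar> \<le> 1"
  by (simp add: abs_mult mult_le_one)

context
  fixes G a b c :: real
  assumes G0: "0 < G" and G1: "G \<le> 1" and ca: "\<bar>c\<bar> \<le> 1" and aa: "\<bar>a\<bar> = 1" and ba: "\<bar>b\<bar> = 1"
begin

lemma S_facts: "0 < Sf G z" "Sf G z \<le> 1" "\<bar>Tf G z\<bar> \<le> 1" "(Tf G z)^2 + (Sf G z)^2 = 1"
  by (auto simp: Sf_pos Sf_le1 Tf_abs Tf_Sf)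

lemma J0_bnd: "\<bar>J G a b c p 0 z\<bar> \<le> 1"
  using S_facts(3)[of z] aa by (simp add: J0 abs_mult)

lemma J_bnd: "k \<noteq> 0 \<Longrightarrow> \<bar>J G a b c p k z\<bar> \<le> 4 * Sf G z"
  and J'_bnd: "\<bar>J' G a b c p k z\<bar> \<le> 4 * Sf G z"
proof -
  define S T where "S = Sf G z" and "T = Tf G z"
  define C where "C = cos (c*z+p)"
  define Sn where "Sn = sin (c*z+p)"
  have S: "0 < S" "S \<le> 1" and T: "\<bar>T\<bar> \<le> 1" and ST: "T^2 + S^2 = 1" using S_facts[of z] by (auto simp: S_def T_def)
  have Cb: "\<bar>C\<bar> \<le> 1" "\<bar>Sn\<bar> \<le> 1" by (auto simp: C_def Sn_def)
  have Gb: "\<bar>G\<bar> \<le> 1" using G0 G1 by simp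
  have GT: "\<bar>G * T\<bar> \<le> 1" by (rule mono3[OF Gb T])
  have cS: "\<bar>c\<bar> \<le> 1" by (rule ca)
  have g: "\<bar>x * S * y\<bar> \<le> S" if "\<bar>x\<bar> \<le> 1" "\<bar>y\<bar> \<le> 1" for x y
  proof -
    have "\<bar>x * S * y\<bar> = \<bar>x * y\<bar> * S" using S by (simp add: abs_mult)
    also have "\<dots> \<le> 1 * S" using mono3[OF that] S by (intro mult_right_mono) auto
    finally show ?thesis by simp
  qed
  have w2b: "\<bar>w2 G b c p z\<bar> \<le> S" using g[OF _ Cb(1), of b] ba by (simp add: w2_def S_def C_def)
  have w3b: "\<bar>w3 G b c p z\<bar> \<le> S" using g[OF _ Cb(2), of b] ba by (simp add: w3_def S_def Sn_def)
  have v1b: "\<bar>v1 G a z\<bar> \<le> S"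
  proof -
    have "v1 G a z = (a*G) * S * S" by (simp add: v1_def S_def power2_eq_square)
    moreover have "\<bar>a*G\<bar> \<le> 1" using mono3[OF _ Gb, of a] aa by simp
    ultimately show ?thesis using g[of "a*G" S] S by simp
  qed
  have v2b: "\<bar>v2 G b c p z\<bar> \<le> 2 * S"
  proof -
    have "v2 G b c p z = b * (- ((G*T) * S * C) - c * S * Sn)" by (simp add: v2_def S_def T_def C_def Sn_def algebra_simps)
    then have "\<bar>v2 G b c p z\<bar> = \<bar>- ((G*T) * S * C) - c * S * Sn\<bar>" using ba by (simp add: abs_mult)
    also have "\<dots> \<le> \<bar>(G*T) * S * C\<bar> + \<bar>c * S * Sn\<bar>" by linarith
    also have "\<dots> \<le> S + S" using g[OF GT Cb(1)] g[OF cS Cb(2)] by linarith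
    finally show ?thesis by simp
  qed
  have v3b: "\<bar>v3 G b c p z\<bar> \<le> 2 * S"
  proof -
    have "v3 G b c p z = b * (- ((G*T) * S * Sn) + c * S * C)" by (simp add: v3_def S_def T_def C_def Sn_def algebra_simps)
    then have "\<bar>v3 G b c p z\<bar> = \<bar>- ((G*T) * S * Sn) + c * S * C\<bar>" using ba by (simp add: abs_mult)
    also have "\<dots> \<le> \<bar>(G*T) * S * Sn\<bar> + \<bar>c * S * C\<bar>" by linarith
    also have "\<dots> \<le> S + S" using g[OF GT Cb(2)] g[OF cS Cb(1)] by linarith
    finally show ?thesis by simp
  qed
  have T20: "0 \<le> T^2" "0 \<le> S^2" by simp_all
  have T2: "0 \<le> T^2" "T^2 \<le> 1" "0 \<le> S^2" "S^2 \<le> 1" using ST T20 by linarith+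
  have Q: "\<bar>G^2 * (T^2 - S^2) - c^2\<bar> \<le> 2"
  proof -
    have "\<bar>T^2 - S^2\<bar> \<le> 1" using T2 by linarith
    moreover have "\<bar>G^2\<bar> \<le> 1" using Gb by (simp add: abs_square_le_1)
    ultimately have "\<bar>G^2 * (T^2 - S^2)\<bar> \<le> 1" using mono3 by blast
    moreover have "c^2 \<le> 1" using ca by (simp add: abs_square_le_1)
    moreover have "0 \<le> c^2" by simp
    ultimately show ?thesis by linarith
  qed
  have GcT: "\<bar>G * c * T\<bar> \<le> 1" using mono3[OF mono3[OF Gb cS] T] .
  have R: "\<bar>(G^2 * (T^2 - S^2) - c^2) * C + 2*G*c*T * Sn\<bar> \<le> 4"
  proof -
    have "\<bar>(G^2 * (T^2 - S^2) - c^2) * C\<bar> \<le> 2 * 1" unfolding abs_mult using Q Cb by (intro mult_mono) auto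
    moreover have "\<bar>2*G*c*T * Sn\<bar> \<le> 2 * 1"
    proof -
      have "2*G*c*T * Sn = 2 * ((G*c*T) * Sn)" by simp
      then show ?thesis using mono3[OF GcT Cb(2)] by (simp only: abs_mult)
    qed
    ultimately show ?thesis by linarith
  qed
  have R2: "\<bar>(G^2 * (T^2 - S^2) - c^2) * Sn - 2*G*c*T * C\<bar> \<le> 4"
  proof -
    have "\<bar>(G^2 * (T^2 - S^2) - c^2) * Sn\<bar> \<le> 2 * 1" unfolding abs_mult using Q Cb by (intro mult_mono) auto
    moreover have "\<bar>2*G*c*T * C\<bar> \<le> 2 * 1"
    proof -
      have "2*G*c*T * C = 2 * ((G*c*T) * C)" by simp
      then show ?thesis using mono3[OF GcT Cb(1)] by (simp only: abs_mult)
    qed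
    ultimately show ?thesis by linarith
  qed
  have u1b: "\<bar>u1 G a z\<bar> \<le> 2 * S"
  proof -
    have "u1 G a z = - (2 * ((a*G) * (G*T) * S) * S)" by (simp add: u1_def S_def T_def power2_eq_square)
    moreover have "\<bar>(a*G) * (G*T) * S\<bar> \<le> 1" using mono3[OF mono3[OF _ Gb, of a] GT] S aa
      by (simp add: abs_mult mult_le_one)
    ultimately show ?thesis using S by (simp add: abs_mult mult_le_one)
  qed
  have u2b: "\<bar>u2 G b c p z\<bar> \<le> 4 * S"
  proof -
    have "u2 G b c p z = b * S * ((G^2 * (T^2 - S^2) - c^2) * C + 2*G*c*T * Sn)"
      by (simp add: u2_def S_def T_def C_def Sn_def)
    then have "\<bar>u2 G b c p z\<bar> = S * \<bar>(G^2 * (T^2 - S^2) - c^2) * C + 2*G*c*T * Sn\<bar>" using ba S by (simp add: abs_mult)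
    also have "\<dots> \<le> S * 4" using R S by (intro mult_left_mono) auto
    finally show ?thesis by simp
  qed
  have u3b: "\<bar>u3 G b c p z\<bar> \<le> 4 * S"
  proof -
    have "u3 G b c p z = b * S * ((G^2 * (T^2 - S^2) - c^2) * Sn - 2*G*c*T * C)"
      by (simp add: u3_def S_def T_def C_def Sn_def)
    then have "\<bar>u3 G b c p z\<bar> = S * \<bar>(G^2 * (T^2 - S^2) - c^2) * Sn - 2*G*c*T * C\<bar>" using ba S by (simp add: abs_mult)
    also have "\<dots> \<le> S * 4" using R2 S by (intro mult_left_mono) auto
    finally show ?thesis by simp
  qed
  show "k \<noteq> 0 \<Longrightarrow> \<bar>J G a b c p k z\<bar> \<le> 4 * Sf G z"
    using w2b w3b v1b v2b v3b S unfolding S_def[symmetric] by (auto simp: J_def)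
  show "\<bar>J' G a b c p k z\<bar> \<le> 4 * Sf G z"
    using v1b v2b v3b u1b u2b u3b S unfolding S_def[symmetric] by (auto simp: J'_def)
qed

end

lemma mvt_decay:
  fixes f f' :: "real \<Rightarrow> real"
  assumes d: "\<And>t. (f has_real_derivative f' t) (at t)" and b: "\<And>t. \<bar>f' t\<bar> \<le> K * Sf G t"
    and h: "\<bar>h\<bar> \<le> 1" and K: "0 \<le> K" and G: "0 \<le> G" "G \<le> 1"
  shows "\<bar>f z - f (z + h)\<bar> \<le> 6 * K * \<bar>h\<bar> * exp (- G * \<bar>z\<bar>)"
proof -
  have key: "\<bar>f' \<xi>\<bar> \<le> 6 * K * exp (- G * \<bar>z\<bar>)" if "\<bar>\<xi> - z\<bar> \<le> \<bar>h\<bar>" for \<xi>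
  proof -
    have "\<bar>f' \<xi>\<bar> \<le> K * (2 * exp (- G * \<bar>\<xi>\<bar>))"
      using b[of \<xi>] Sf_exp[OF G(1), of \<xi>] K by (meson mult_left_mono order_trans)
    also have "exp (- G * \<bar>\<xi>\<bar>) \<le> exp (- G * \<bar>z\<bar> + 1)"
    proof -
      have "\<bar>z\<bar> \<le> \<bar>\<xi>\<bar> + 1" using that h by linarith
      then have "G * \<bar>z\<bar> \<le> G * \<bar>\<xi>\<bar> + G" using G by (metis distrib_left mult.right_neutral mult_left_mono)
      then show ?thesis using G by simp
    qed
    also have "exp (- G * \<bar>z\<bar> + 1) \<le> 3 * exp (- G * \<bar>z\<bar>)"
    proof -
      have "exp (- G * \<bar>z\<bar> + 1) = exp 1 * exp (- G * \<bar>z\<bar>)" by (simp add: exp_add[symmetric])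
      also have "\<dots> \<le> 3 * exp (- G * \<bar>z\<bar>)" using exp_le by (intro mult_right_mono) auto
      finally show ?thesis .
    qed
    finally have "\<bar>f' \<xi>\<bar> \<le> K * (2 * (3 * exp (- G * \<bar>z\<bar>)))" using K by (simp add: mult_left_mono)
    then show ?thesis by simp
  qed
  consider "h = 0" | "h > 0" | "h < 0" by linarith
  then show ?thesis
  proof cases
    case 1 then show ?thesis by simp
  next
    case 2
    obtain \<xi> where \<xi>: "z < \<xi>" "\<xi> < z + h" "f (z + h) - f z = (z + h - z) * f' \<xi>"
      using MVT2[of z "z+h" f f'] 2 d by auto
    have "\<bar>f z - f (z + h)\<bar> = \<bar>h\<bar> * \<bar>f' \<xi>\<bar>" using \<xi>(3) by (metis abs_minus_commute abs_mult add_diff_cancel_left')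
    also have "\<dots> \<le> \<bar>h\<bar> * (6 * K * exp (- G * \<bar>z\<bar>))" using key[of \<xi>] \<xi> 2
      by (intro mult_left_mono) auto
    finally show ?thesis by (simp add: algebra_simps)
  next
    case 3
    obtain \<xi> where \<xi>: "z + h < \<xi>" "\<xi> < z" "f z - f (z + h) = (z - (z + h)) * f' \<xi>"
      using MVT2[of "z+h" z f f'] 3 d by auto
    have "\<bar>f z - f (z + h)\<bar> = \<bar>h\<bar> * \<bar>f' \<xi>\<bar>" using \<xi>(3) by (simp add: abs_mult)
    also have "\<dots> \<le> \<bar>h\<bar> * (6 * K * exp (- G * \<bar>z\<bar>))" using key[of \<xi>] \<xi> 3
      by (intro mult_left_mono) auto
    finally show ?thesis by (simp add: algebra_simps)
  qed
qed

lemma Tf_diff_ind: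
  assumes G: "0 \<le> G"
  shows "\<bar>Tf G (x - y1) - Tf G (x - y3)\<bar> \<le> 2 * indicator {min y1 y3..max y1 y3} x
          + 2 * exp (- (2 * G) * \<bar>x - y1\<bar>) + 2 * exp (- (2 * G) * \<bar>x - y3\<bar>)"
proof -
  have e: "0 \<le> 2 * exp (- (2 * G) * \<bar>x - y\<bar>)" for y by simp
  consider "x \<in> {min y1 y3..max y1 y3}" | "x < min y1 y3" | "x > max y1 y3" by force
  then show ?thesis
  proof cases
    case 1
    have "\<bar>Tf G (x - y1) - Tf G (x - y3)\<bar> \<le> 2" using Tf_abs[of G "x-y1"] Tf_abs[of G "x-y3"] by linarith
    moreover have ind: "indicator {min y1 y3..max y1 y3} x = (1::real)" using 1 by simp
    ultimately show ?thesis unfolding ind using e[of y1] e[of y3] by linarith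
  next
    case 2
    have "\<bar>Tf G (x - y1) + 1\<bar> \<le> 2 * exp (- (2 * G) * \<bar>x - y1\<bar>)" "\<bar>Tf G (x - y3) + 1\<bar> \<le> 2 * exp (- (2 * G) * \<bar>x - y3\<bar>)"
      using 2 Tf_neg_bound[OF G, of "x - y1"] Tf_neg_bound[OF G, of "x - y3"] by auto
    moreover have "indicator {min y1 y3..max y1 y3} x = (0::real)" using 2 by auto
    ultimately show ?thesis by (auto simp: abs_le_iff)
  next
    case 3
    have "\<bar>Tf G (x - y1) - 1\<bar> \<le> 2 * exp (- (2 * G) * \<bar>x - y1\<bar>)" "\<bar>Tf G (x - y3) - 1\<bar> \<le> 2 * exp (- (2 * G) * \<bar>x - y3\<bar>)"
      using 3 Tf_pos_bound[OF G, of "x - y1"] Tf_pos_bound[OF G, of "x - y3"] by auto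
    moreover have "indicator {min y1 y3..max y1 y3} x = (0::real)" using 3 by (simp add: indicator_def max_def)
    ultimately show ?thesis by (auto simp: abs_le_iff)
  qed
qed

lemma Sf_sq: "0 \<le> G \<Longrightarrow> (Sf G z)^2 \<le> 4 * exp (- (2 * G) * \<bar>z\<bar>)"
proof -
  assume G: "0 \<le> G"
  have "(Sf G z)^2 \<le> (2 * exp (- G * \<bar>z\<bar>))^2" using Sf_exp[OF G] Sf_pos[of G z] by (intro power_mono) auto
  also have "\<dots> = 4 * exp (- (2 * G) * \<bar>z\<bar>)" by (simp add: power2_eq_square exp_add[symmetric])
  finally show ?thesis .
qed

context
  fixes G a b c :: real
  assumes G0: "0 < G" and G1: "G \<le> 1" and ca: "\<bar>c\<bar> \<le> 1" and aa: "\<bar>a\<bar> = 1" and ba: "\<bar>b\<bar> = 1"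
begin

lemma rot_id: "((u::real)*X - v * Y)^2 + (u * Y + v * X)^2 = (u^2+v^2)*(X^2+Y^2)"
  by (simp add: power2_eq_square algebra_simps)

lemma J_ang: "(\<Sum>k<(6::nat). (J G a b c p k z - J G a b c q k z)^2) \<le> 3 * (Sf G z)^2 * (2 - 2 * cos (p - q))"
proof -
  define S T where "S = Sf G z" and "T = Tf G z"
  define X Y where "X = cos (c * z+p) - cos (c * z+q)" and "Y = sin (c * z+p) - sin (c * z+q)"
  define u v where "u = -G * T * S" and "v = c * S"
  have XY: "X^2 + Y^2 = 2 - 2 * cos (p - q)"
  proof -
    have "X^2 + Y^2 = ((sin (c * z+p))^2 + (cos (c * z+p))^2) + ((sin (c * z+q))^2 + (cos (c * z+q))^2)
        - 2 * (cos (c * z+p) * cos (c * z+q) + sin (c * z+p) * sin (c * z+q))"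
      unfolding X_def Y_def by (simp add: power2_eq_square algebra_simps)
    also have "cos (c * z+p) * cos (c * z+q) + sin (c * z+p) * sin (c * z+q) = cos ((c * z+p) - (c * z+q))"
      by (rule cos_diff[symmetric])
    finally show ?thesis by simp
  qed
  have b2: "b^2 = 1" using ba by (metis abs_power2 one_power2 power2_abs)
  have k0: "J G a b c p 0 z - J G a b c q 0 z = 0" by (simp add: J_def)
  have k3: "J G a b c p 3 z - J G a b c q 3 z = 0" by (simp add: J_def)
  have k1: "J G a b c p 1 z - J G a b c q 1 z = b*(S * X)"
    by (simp add: J_def w2_def S_def X_def right_diff_distrib)
  have k2: "J G a b c p 2 z - J G a b c q 2 z = b*(S * Y)"
    by (simp add: J_def w3_def S_def Y_def right_diff_distrib)
  have k4: "J G a b c p 4 z - J G a b c q 4 z = b*(u * X - v * Y)"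
    unfolding J_def v2_def S_def T_def X_def Y_def u_def v_def by (simp add: algebra_simps)
  have k5: "J G a b c p 5 z - J G a b c q 5 z = b*(u * Y + v * X)"
    unfolding J_def v3_def S_def T_def X_def Y_def u_def v_def by (simp add: algebra_simps)
  have sq: "(b * w)^2 = w^2" for w using b2 by (simp add: power_mult_distrib)
  have "(\<Sum>k<(6::nat). (J G a b c p k z - J G a b c q k z)^2)
      = (S * X)^2 + (S * Y)^2 + ((u * X - v * Y)^2 + (u * Y + v * X)^2)"
    unfolding sum6 k0 k1 k2 k3 k4 k5 sq by simp
  also have "\<dots> = (S^2 + (u^2 + v^2)) * (X^2 + Y^2)"
    unfolding rot_id by (simp add: power_mult_distrib algebra_simps)
  also have "\<dots> \<le> (3 * S^2) * (X^2 + Y^2)"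
  proof (rule mult_right_mono)
    have "\<bar>G * T\<bar> \<le> 1" using mono3[of G T] G0 G1 Tf_abs[of G z] by (simp add: T_def)
    then have "(G * T)^2 \<le> 1" by (simp add: abs_square_le_1)
    have "u^2 = (G * T)^2 * S^2" by (simp add: u_def power_mult_distrib)
    also have "\<dots> \<le> 1 * S^2" using \<open>(G * T)^2 \<le> 1\<close> by (rule mult_right_mono) simp
    finally have "u^2 \<le> S^2" by simp
    moreover have "v^2 \<le> S^2"
    proof -
      have "c^2 \<le> 1" using ca by (simp add: abs_square_le_1)
      have "v^2 = c^2 * S^2" by (simp add: v_def power_mult_distrib)
      also have "\<dots> \<le> 1 * S^2" using \<open>c^2 \<le> 1\<close> by (rule mult_right_mono) simp
      finally show ?thesis by simp
    qed
    ultimately show "S^2 + (u^2 + v^2) \<le> 3 * S^2" by simp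
  qed simp
  finally show ?thesis unfolding XY S_def by simp
qed

end

lemma sq_sum: "((p::real) + q)^2 \<le> 2 * p^2 + 2 * q^2"
proof -
  have "0 \<le> (p - q)^2" by simp
  then show ?thesis unfolding power2_sum power2_diff by linarith
qed

context
  fixes G a b c :: real
  assumes G0: "0 < G" and G1: "G \<le> 1" and ca: "\<bar>c\<bar> \<le> 1" and aa: "\<bar>a\<bar> = 1" and ba: "\<bar>b\<bar> = 1"
begin

lemma eint: "integrable lborel (\<lambda>x. exp (- (2 * G) * \<bar>x - y\<bar>))"
  "integral\<^sup>L lborel (\<lambda>x. exp (- (2 * G) * \<bar>x - y\<bar>)) \<le> 1 / G"
  using exp_abs_int[of "2 * G" y] G0 by auto

lemma part1_big:
  assumes h: "1 \<le> \<bar>y1 - y3\<bar>"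
  shows "\<exists>Gf. integrable lborel Gf \<and>
     (\<forall>x. (\<Sum>k<(6::nat). (J G a b c p1 k (x - y1) - J G a b c p3 k (x - y3))^2) \<le> Gf x) \<and>
     integral\<^sup>L lborel Gf \<le> (3000 / G) * (y1 - y3)^2"
proof -
  define e1 e3 where "e1 = (\<lambda>x. exp (- (2 * G) * \<bar>x - y1\<bar>))" and "e3 = (\<lambda>x. exp (- (2 * G) * \<bar>x - y3\<bar>))"
  define ind where "ind = (indicator {min y1 y3..max y1 y3} :: real \<Rightarrow> real)"
  define Gf where "Gf = (\<lambda>x. 1000 * (ind x + e1 x + e3 x))"
  have i1: "integrable lborel e1" "integral\<^sup>L lborel e1 \<le> 1/G" using eint unfolding e1_def by auto
  have i3: "integrable lborel e3" "integral\<^sup>L lborel e3 \<le> 1/G" using eint unfolding e3_def by auto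
  have ii: "integrable lborel ind" "integral\<^sup>L lborel ind = \<bar>y1 - y3\<bar>"
    using ind_int[of "min y1 y3" "max y1 y3"] unfolding ind_def by (auto simp: max_def min_def)
  have gi: "integrable lborel Gf" unfolding Gf_def using i1 i3 ii by auto
  have gI: "integral\<^sup>L lborel Gf = 1000 * (\<bar>y1 - y3\<bar> + integral\<^sup>L lborel e1 + integral\<^sup>L lborel e3)"
    unfolding Gf_def using i1 i3 ii by simp
  have pw: "(\<Sum>k<(6::nat). (J G a b c p1 k (x - y1) - J G a b c p3 k (x - y3))^2) \<le> Gf x" for x
  proof -
    define z1 z3 where "z1 = x - y1" and "z3 = x - y3"
    define d where "d = (\<lambda>k. (J G a b c p1 k z1 - J G a b c p3 k z3)^2)"
    have e1n: "0 \<le> e1 x" and e3n: "0 \<le> e3 x" by (simp_all add: e1_def e3_def)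
    have indn: "0 \<le> ind x" by (simp add: ind_def)
    have t0: "d 0 \<le> 4 * ind x + 4 * e1 x + 4 * e3 x"
    proof -
      have a2: "a^2 = 1" using aa by (metis abs_power2 one_power2 power2_abs)
      have "d 0 = (Tf G z1 - Tf G z3)^2" unfolding d_def J0
        by (simp add: right_diff_distrib[symmetric] power_mult_distrib a2)
      also have "\<dots> = \<bar>Tf G z1 - Tf G z3\<bar> * \<bar>Tf G z1 - Tf G z3\<bar>" by (simp add: power2_eq_square)
      also have "\<dots> \<le> 2 * \<bar>Tf G z1 - Tf G z3\<bar>"
        using Tf_abs[of G z1] Tf_abs[of G z3] by (intro mult_right_mono) auto
      also have "\<dots> \<le> 2 * (2 * ind x + 2 * e1 x + 2 * e3 x)"
        using Tf_diff_ind[of G x y1 y3] G0 unfolding z1_def z3_def ind_def e1_def e3_def by simp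
      finally show ?thesis by simp
    qed
    have tk: "d k \<le> 128 * e1 x + 128 * e3 x" if "k \<noteq> 0" for k
    proof -
      have "\<bar>J G a b c p1 k z1 - J G a b c p3 k z3\<bar> \<le> 4 * Sf G z1 + 4 * Sf G z3"
        using J_bnd[OF G0 G1 ca aa ba that, of p1 z1] J_bnd[OF G0 G1 ca aa ba that, of p3 z3] by linarith
      then have "d k \<le> (4 * Sf G z1 + 4 * Sf G z3)^2" unfolding d_def
        by (metis abs_ge_zero power2_abs power_mono)
      also have "\<dots> \<le> 32 * (Sf G z1)^2 + 32 * (Sf G z3)^2"
        using sq_sum[of "4 * Sf G z1" "4 * Sf G z3"] by (simp add: power_mult_distrib)
      also have "\<dots> \<le> 32 * (4 * e1 x) + 32 * (4 * e3 x)"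
        using Sf_sq[of G z1] Sf_sq[of G z3] G0 unfolding e1_def e3_def z1_def z3_def by simp
      finally show ?thesis by simp
    qed
    have "(\<Sum>k<(6::nat). (J G a b c p1 k (x - y1) - J G a b c p3 k (x - y3))^2) = d 0 + d 1 + d 2 + d 3 + d 4 + d 5"
      unfolding d_def z1_def z3_def by (rule sum6)
    also have "\<dots> \<le> Gf x" unfolding Gf_def using t0 tk[of 1] tk[of 2] tk[of 3] tk[of 4] tk[of 5] e1n e3n indn by simp
    finally show ?thesis .
  qed
  have "integral\<^sup>L lborel Gf \<le> 1000 * (\<bar>y1 - y3\<bar> + 1/G + 1/G)" unfolding gI using i1(2) i3(2) by simp
  also have "\<dots> \<le> (3000 / G) * (y1 - y3)^2"
  proof -
    have "\<bar>y1 - y3\<bar> * 1 \<le> \<bar>y1 - y3\<bar> * \<bar>y1 - y3\<bar>" using h by (intro mult_left_mono) auto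
    then have hh: "\<bar>y1 - y3\<bar> \<le> (y1 - y3)^2" by (simp add: power2_eq_square)
    have h1: "1 \<le> (y1 - y3)^2" using h hh by linarith
    have g1: "1000 \<le> 1000 / G" using G0 G1 by (simp add: field_simps)
    have "1000 * \<bar>y1 - y3\<bar> \<le> 1000 * (y1 - y3)^2" using hh by simp
    also have "\<dots> \<le> (1000 / G) * (y1 - y3)^2" using g1 by (intro mult_right_mono) auto
    finally have A1: "1000 * \<bar>y1 - y3\<bar> \<le> (1000 / G) * (y1 - y3)^2" .
    have "(2000 / G) * 1 \<le> (2000 / G) * (y1 - y3)^2" using h1 G0 by (intro mult_left_mono) auto
    then have A2: "2000 / G \<le> (2000 / G) * (y1 - y3)^2" by simp
    have e: "1000 * (\<bar>y1 - y3\<bar> + 1/G + 1/G) = 1000 * \<bar>y1 - y3\<bar> + 2000 / G" by simp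
    have f: "(3000 / G) * (y1 - y3)^2 = (1000 / G) * (y1 - y3)^2 + (2000 / G) * (y1 - y3)^2" by (simp add: field_simps)
    show ?thesis unfolding e f using A1 A2 by linarith
  qed
  finally show ?thesis using gi pw by blast
qed

lemma part1_small:
  assumes h: "\<bar>y1 - y3\<bar> \<le> 1"
  shows "\<exists>Gf. integrable lborel Gf \<and>
     (\<forall>x. (\<Sum>k<(6::nat). (J G a b c p1 k (x - y1) - J G a b c p3 k (x - y3))^2) \<le> Gf x) \<and>
     integral\<^sup>L lborel Gf \<le> (14000 / G) * (\<bar>y1 - y3\<bar> + infdist (p1 - p3) (range (\<lambda>k::int. 2 * pi * of_int k)))^2"
proof -
  define \<delta> where "\<delta> = infdist (p1 - p3) (range (\<lambda>k::int. 2 * pi * of_int k))"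
  define Q where "Q = (\<bar>y1 - y3\<bar> + \<delta>)^2"
  have Q0: "0 \<le> Q" by (simp add: Q_def)
  have d0: "0 \<le> \<delta>" by (simp add: \<delta>_def infdist_nonneg)
  have hQ: "(y1 - y3)^2 \<le> Q" unfolding Q_def using d0 by (metis abs_ge_zero le_add_same_cancel1 power2_abs power_mono)
  have dQ: "\<delta>^2 \<le> Q" unfolding Q_def using d0 by (intro power_mono) auto
  define e1 e3 where "e1 = (\<lambda>x. exp (- (2 * G) * \<bar>x - y1\<bar>))" and "e3 = (\<lambda>x. exp (- (2 * G) * \<bar>x - y3\<bar>))"
  define Gf where "Gf = (\<lambda>x. 7000 * Q * (e1 x + e3 x))"
  have i1: "integrable lborel e1" "integral\<^sup>L lborel e1 \<le> 1/G" using eint unfolding e1_def by auto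
  have i3: "integrable lborel e3" "integral\<^sup>L lborel e3 \<le> 1/G" using eint unfolding e3_def by auto
  have gi: "integrable lborel Gf" unfolding Gf_def using i1 i3 by auto
  have gI: "integral\<^sup>L lborel Gf = 7000 * Q * (integral\<^sup>L lborel e1 + integral\<^sup>L lborel e3)"
    unfolding Gf_def using i1 i3 by simp
  have "integral\<^sup>L lborel Gf \<le> 7000 * Q * (1/G + 1/G)" unfolding gI using i1(2) i3(2) Q0
    by (intro mult_left_mono) auto
  also have "\<dots> = (14000 / G) * Q" by simp
  finally have iG: "integral\<^sup>L lborel Gf \<le> (14000 / G) * Q" .
  have pw: "(\<Sum>k<(6::nat). (J G a b c p1 k (x - y1) - J G a b c p3 k (x - y3))^2) \<le> Gf x" for x
  proof -
    define z1 z3 where "z1 = x - y1" and "z3 = x - y3"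
    have z13: "z1 + (y1 - y3) = z3" by (simp add: z1_def z3_def)
    define \<alpha> where "\<alpha> = (\<lambda>k. J G a b c p1 k z1 - J G a b c p1 k z3)"
    define \<beta> where "\<beta> = (\<lambda>k. J G a b c p1 k z3 - J G a b c p3 k z3)"
    have e1x: "(exp (- G * \<bar>z1\<bar>))^2 = e1 x" by (simp add: e1_def z1_def power2_eq_square exp_add[symmetric])
    have ab: "\<bar>\<alpha> k\<bar> \<le> 24 * \<bar>y1 - y3\<bar> * exp (- G * \<bar>z1\<bar>)" for k
      using mvt_decay[of "J G a b c p1 k" "J' G a b c p1 k" 4 G "y1 - y3" z1, OF J_deriv J'_bnd[OF G0 G1 ca aa ba] h]
        G0 G1 unfolding \<alpha>_def z13 by simp
    have a2: "(\<alpha> k)^2 \<le> 576 * (y1 - y3)^2 * e1 x" for k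
    proof -
      have "(\<alpha> k)^2 \<le> (24 * \<bar>y1 - y3\<bar> * exp (- G * \<bar>z1\<bar>))^2"
        using ab[of k] by (metis abs_ge_zero power2_abs power_mono)
      also have "\<dots> = 576 * (y1 - y3)^2 * e1 x" unfolding e1x[symmetric] by (simp add: power_mult_distrib)
      finally show ?thesis .
    qed
    have sa: "(\<Sum>k<(6::nat). (\<alpha> k)^2) \<le> 6 * (576 * (y1 - y3)^2 * e1 x)"
      using sum_bounded_above[of "{..<(6::nat)}" "\<lambda>k. (\<alpha> k)^2", OF a2] by simp
    have sb: "(\<Sum>k<(6::nat). (\<beta> k)^2) \<le> 3 * (4 * e3 x) * \<delta>^2"
    proof -
      have "(\<Sum>k<(6::nat). (\<beta> k)^2) \<le> 3 * (Sf G z3)^2 * (2 - 2 * cos (p1 - p3))"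
        unfolding \<beta>_def by (rule J_ang[OF G0 G1 ca aa ba])
      also have "\<dots> \<le> 3 * (4 * e3 x) * \<delta>^2"
      proof (rule mult_mono)
        show "3 * (Sf G z3)^2 \<le> 3 * (4 * e3 x)" using Sf_sq[of G z3] G0 by (simp add: e3_def z3_def)
        show "2 - 2 * cos (p1 - p3) \<le> \<delta>^2" unfolding \<delta>_def by (rule ang_le)
      qed (auto simp: e3_def)
      finally show ?thesis .
    qed
    have "(\<Sum>k<(6::nat). (J G a b c p1 k (x - y1) - J G a b c p3 k (x - y3))^2) = (\<Sum>k<(6::nat). (\<alpha> k + \<beta> k)^2)"
      by (simp add: \<alpha>_def \<beta>_def z1_def z3_def)
    also have "\<dots> \<le> (\<Sum>k<(6::nat). 2 * (\<alpha> k)^2 + 2 * (\<beta> k)^2)" by (intro sum_mono sq_sum)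
    also have "\<dots> = 2 * (\<Sum>k<(6::nat). (\<alpha> k)^2) + 2 * (\<Sum>k<(6::nat). (\<beta> k)^2)"
      by (simp add: sum.distrib sum_distrib_left)
    also have "\<dots> \<le> 6912 * ((y1 - y3)^2 * e1 x) + 24 * (\<delta>^2 * e3 x)"
    proof -
      have "3 * (4 * e3 x) * \<delta>^2 = 12 * (\<delta>^2 * e3 x)" by simp
      moreover have "6 * (576 * (y1 - y3)^2 * e1 x) = 3456 * ((y1 - y3)^2 * e1 x)" by simp
      ultimately show ?thesis using sa sb by linarith
    qed
    also have "\<dots> \<le> 7000 * Q * e1 x + 7000 * Q * e3 x"
    proof (intro add_mono)
      have "6912 * (y1 - y3)^2 * e1 x \<le> 7000 * Q * e1 x" using hQ Q0 by (intro mult_right_mono) (auto simp: e1_def)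
      then show "6912 * ((y1 - y3)^2 * e1 x) \<le> 7000 * Q * e1 x" by (simp add: mult.assoc)
      have "24 * \<delta>^2 * e3 x \<le> 7000 * Q * e3 x" using dQ Q0 by (intro mult_right_mono) (auto simp: e3_def)
      then show "24 * (\<delta>^2 * e3 x) \<le> 7000 * Q * e3 x" by (simp add: mult.assoc)
    qed
    also have "\<dots> = Gf x" by (simp add: Gf_def algebra_simps)
    finally show ?thesis .
  qed
  show ?thesis using gi pw iG unfolding Q_def \<delta>_def by blast
qed

lemma part1_profile:
  "\<exists>Gf. integrable lborel Gf \<and>
     (\<forall>x. (norm (U G a b c y1 p1 x - U G a b c y3 p3 x))^2 + (norm (dU G a b c y1 p1 x - dU G a b c y3 p3 x))^2 \<le> Gf x) \<and>
     integral\<^sup>L lborel Gf \<le> (20000 / G) * (\<bar>y1 - y3\<bar> + infdist (p1 - p3) (range (\<lambda>k::int. 2 * pi * of_int k)))^2"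
proof -
  define Q where "Q = (\<bar>y1 - y3\<bar> + infdist (p1 - p3) (range (\<lambda>k::int. 2 * pi * of_int k)))^2"
  have Q0: "0 \<le> Q" by (simp add: Q_def)
  have hQ: "(y1 - y3)^2 \<le> Q" unfolding Q_def using infdist_nonneg
    by (metis abs_ge_zero le_add_same_cancel1 power2_abs power_mono)
  have gG: "0 < 1 / G" using G0 by simp
  have "\<exists>Gf. integrable lborel Gf \<and>
     (\<forall>x. (\<Sum>k<(6::nat). (J G a b c p1 k (x - y1) - J G a b c p3 k (x - y3))^2) \<le> Gf x) \<and>
     integral\<^sup>L lborel Gf \<le> (20000 / G) * Q"
  proof (cases "1 \<le> \<bar>y1 - y3\<bar>")
    case True
    then obtain Gf where Gf: "integrable lborel Gf"
      "\<forall>x. (\<Sum>k<(6::nat). (J G a b c p1 k (x - y1) - J G a b c p3 k (x - y3))^2) \<le> Gf x"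
      "integral\<^sup>L lborel Gf \<le> (3000 / G) * (y1 - y3)^2" using part1_big by blast
    have "(3000 / G) * (y1 - y3)^2 \<le> (20000 / G) * Q"
      using hQ G0 by (intro mult_mono) (auto simp: divide_right_mono)
    then show ?thesis using Gf by (meson order_trans)
  next
    case False
    then obtain Gf where Gf: "integrable lborel Gf"
      "\<forall>x. (\<Sum>k<(6::nat). (J G a b c p1 k (x - y1) - J G a b c p3 k (x - y3))^2) \<le> Gf x"
      "integral\<^sup>L lborel Gf \<le> (14000 / G) * Q"
      using part1_small[of y1 y3 p1 p3] False unfolding Q_def by auto
    have "(14000 / G) * Q \<le> (20000 / G) * Q"
      using Q0 G0 by (intro mult_right_mono) (auto simp: divide_right_mono)
    then show ?thesis using Gf by (meson order_trans)
  qed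
  then show ?thesis unfolding FA_eq Q_def by simp
qed

end

lemma bil:
  fixes dA dB :: "nat \<Rightarrow> real"
  assumes "\<bar>dA 0\<bar> \<le> \<alpha>0" "\<bar>dB 0\<bar> \<le> \<beta>0" "\<And>k. k \<noteq> 0 \<Longrightarrow> \<bar>dA k\<bar> \<le> \<alpha>" "\<And>k. k \<noteq> 0 \<Longrightarrow> \<bar>dB k\<bar> \<le> \<beta>"
  shows "\<bar>\<Sum>k<(6::nat). dA k * dB k\<bar> \<le> \<alpha>0 * \<beta>0 + 5 * (\<alpha> * \<beta>)"
proof -
  have m: "\<bar>dA k * dB k\<bar> \<le> \<alpha> * \<beta>" if "k \<noteq> 0" for k
    unfolding abs_mult using assms(3,4)[OF that] by (intro mult_mono) auto
  have m0: "\<bar>dA 0 * dB 0\<bar> \<le> \<alpha>0 * \<beta>0"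
    unfolding abs_mult using assms(1,2) by (intro mult_mono) auto
  have "\<bar>\<Sum>k<(6::nat). dA k * dB k\<bar> \<le> (\<Sum>k<(6::nat). \<bar>dA k * dB k\<bar>)" by (rule sum_abs)
  also have "\<dots> = \<bar>dA 0 * dB 0\<bar> + \<bar>dA 1 * dB 1\<bar> + \<bar>dA 2 * dB 2\<bar> + \<bar>dA 3 * dB 3\<bar> + \<bar>dA 4 * dB 4\<bar> + \<bar>dA 5 * dB 5\<bar>"
    by (rule sum6)
  also have "\<dots> \<le> \<alpha>0 * \<beta>0 + 5 * (\<alpha> * \<beta>)" using m0 m[of 1] m[of 2] m[of 3] m[of 4] m[of 5] by simp
  finally show ?thesis .
qed

context
  fixes G a b c :: real
  assumes G0: "0 < G" and G1: "G \<le> 1" and ca: "\<bar>c\<bar> \<le> 1" and aa: "\<bar>a\<bar> = 1" and ba: "\<bar>b\<bar> = 1"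
begin

lemma dec_exp: "k \<noteq> 0 \<Longrightarrow> \<bar>J G a b c p k z\<bar> \<le> 8 * exp (- G * \<bar>z\<bar>)"
  using J_bnd[OF G0 G1 ca aa ba, of k p z] Sf_exp[of G z] G0 by linarith

lemma left_bnds:
  assumes "y0 \<le> y" "x \<le> y0"
  shows "\<bar>J G a b c p 0 (x - y) + a\<bar> \<le> 2 * exp (- 2 * G * (y0 - x))"
    "k \<noteq> 0 \<Longrightarrow> \<bar>J G a b c p k (x - y)\<bar> \<le> 8 * exp (- G * (y0 - x))"
proof -
  have z: "y0 - x \<le> \<bar>x - y\<bar>" using assms by linarith
  have "J G a b c p 0 (x - y) + a = a * (Tf G (x - y) + 1)" by (simp add: J0 algebra_simps)
  then have "\<bar>J G a b c p 0 (x - y) + a\<bar> = \<bar>Tf G (x - y) + 1\<bar>"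
    using aa by (simp add: abs_mult)
  also have "\<dots> \<le> 2 * exp (- 2 * G * \<bar>x - y\<bar>)" using assms G0 by (intro Tf_neg_bound) auto
  also have "\<dots> \<le> 2 * exp (- 2 * G * (y0 - x))" using z G0 by simp
  finally show "\<bar>J G a b c p 0 (x - y) + a\<bar> \<le> 2 * exp (- 2 * G * (y0 - x))" .
  assume k: "k \<noteq> 0"
  have "\<bar>J G a b c p k (x - y)\<bar> \<le> 8 * exp (- G * \<bar>x - y\<bar>)" by (rule dec_exp[OF k])
  also have "\<dots> \<le> 8 * exp (- G * (y0 - x))" using z G0 by simp
  finally show "\<bar>J G a b c p k (x - y)\<bar> \<le> 8 * exp (- G * (y0 - x))" .
qed

lemma right_bnds:
  assumes "y \<le> - y0" "- y0 \<le> x"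
  shows "\<bar>J G a b c p 0 (x - y) - a\<bar> \<le> 2 * exp (- 2 * G * (x + y0))"
    "k \<noteq> 0 \<Longrightarrow> \<bar>J G a b c p k (x - y)\<bar> \<le> 8 * exp (- G * (x + y0))"
proof -
  have z: "x + y0 \<le> \<bar>x - y\<bar>" using assms by linarith
  have "J G a b c p 0 (x - y) - a = a * (Tf G (x - y) - 1)" by (simp add: J0 algebra_simps)
  then have "\<bar>J G a b c p 0 (x - y) - a\<bar> = \<bar>Tf G (x - y) - 1\<bar>"
    using aa by (simp add: abs_mult)
  also have "\<dots> \<le> 2 * exp (- 2 * G * \<bar>x - y\<bar>)" using assms G0 by (intro Tf_pos_bound) auto
  also have "\<dots> \<le> 2 * exp (- 2 * G * (x + y0))" using z G0 by simp
  finally show "\<bar>J G a b c p 0 (x - y) - a\<bar> \<le> 2 * exp (- 2 * G * (x + y0))" .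
  assume k: "k \<noteq> 0"
  have "\<bar>J G a b c p k (x - y)\<bar> \<le> 8 * exp (- G * \<bar>x - y\<bar>)" by (rule dec_exp[OF k])
  also have "\<dots> \<le> 8 * exp (- G * (x + y0))" using z G0 by simp
  finally show "\<bar>J G a b c p k (x - y)\<bar> \<le> 8 * exp (- G * (x + y0))" .
qed

lemma diff_bnds:
  "\<bar>J G a b c p 0 (x - y) - J G a b c q 0 (x - y')\<bar> \<le> 2"
  "k \<noteq> 0 \<Longrightarrow> \<bar>J G a b c p k (x - y) - J G a b c q k (x - y')\<bar> \<le> 8"
proof -
  show "\<bar>J G a b c p 0 (x - y) - J G a b c q 0 (x - y')\<bar> \<le> 2"
    using J0_bnd[OF G0 G1 ca aa ba, of p "x-y"] J0_bnd[OF G0 G1 ca aa ba, of q "x-y'"] by linarith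
  assume k: "k \<noteq> 0"
  show "\<bar>J G a b c p k (x - y) - J G a b c q k (x - y')\<bar> \<le> 8"
    using J_bnd[OF G0 G1 ca aa ba k, of p "x-y"] J_bnd[OF G0 G1 ca aa ba k, of q "x-y'"]
      Sf_le1[of G "x-y"] Sf_le1[of G "x-y'"] by linarith
qed

end

lemma cross:
  fixes G a b c a' b' c' :: real
  assumes G0: "0 < G" and G1: "G \<le> 1" and pa: "\<bar>c\<bar> \<le> 1" "\<bar>a\<bar> = 1" "\<bar>b\<bar> = 1"
    and pb: "\<bar>c'\<bar> \<le> 1" "\<bar>a'\<bar> = 1" "\<bar>b'\<bar> = 1"
    and y0: "0 \<le> y0" and ys: "y0 \<le> y1" "y0 \<le> y3" "y2 \<le> - y0" "y4 \<le> - y0"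
  shows "\<exists>Gx. integrable lborel Gx \<and>
    (\<forall>x. \<bar>\<Sum>k<(6::nat). (J G a b c p1 k (x - y1) - J G a b c p3 k (x - y3)) * (J G a' b' c' p2 k (x - y2) - J G a' b' c' p4 k (x - y4))\<bar> \<le> Gx x) \<and>
    integral\<^sup>L lborel Gx \<le> 1296 * exp (- 2 * G * y0) * (2 * y0 + 4 / G)"
proof -
  define E where "E = exp (- 2 * G * y0)"
  define ind where "ind = (indicator {-y0..y0} :: real \<Rightarrow> real)"
  define f1 f2 where "f1 = (\<lambda>x. exp (- G * \<bar>x - y0\<bar>))" and "f2 = (\<lambda>x. exp (- G * \<bar>x - (- y0)\<bar>))"
  define Gx where "Gx = (\<lambda>x. 1296 * E * (ind x + f1 x + f2 x))"
  have E0: "0 < E" by (simp add: E_def)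
  have i1: "integrable lborel f1" "integral\<^sup>L lborel f1 \<le> 2/G" using exp_abs_int[OF G0] unfolding f1_def by auto
  have i2: "integrable lborel f2" "integral\<^sup>L lborel f2 \<le> 2/G" using exp_abs_int[OF G0, of "- y0"] unfolding f2_def by auto
  have ii: "integrable lborel ind" "integral\<^sup>L lborel ind = 2 * y0"
    using ind_int[of "-y0" y0] y0 unfolding ind_def by auto
  have gi: "integrable lborel Gx" unfolding Gx_def using i1 i2 ii by auto
  have "integral\<^sup>L lborel Gx = 1296 * E * (2 * y0 + integral\<^sup>L lborel f1 + integral\<^sup>L lborel f2)"
    unfolding Gx_def using i1 i2 ii by simp
  also have "\<dots> \<le> 1296 * E * (2 * y0 + 2/G + 2/G)" using i1(2) i2(2) E0 by (intro mult_left_mono) auto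
  also have "\<dots> = 1296 * exp (- 2 * G * y0) * (2 * y0 + 4 / G)" by (simp add: E_def)
  finally have iG: "integral\<^sup>L lborel Gx \<le> 1296 * exp (- 2 * G * y0) * (2 * y0 + 4 / G)" .
  have pw: "\<bar>\<Sum>k<(6::nat). (J G a b c p1 k (x - y1) - J G a b c p3 k (x - y3)) * (J G a' b' c' p2 k (x - y2) - J G a' b' c' p4 k (x - y4))\<bar> \<le> Gx x" for x
  proof -
    define dA dB where "dA = (\<lambda>k. J G a b c p1 k (x - y1) - J G a b c p3 k (x - y3))"
      and "dB = (\<lambda>k. J G a' b' c' p2 k (x - y2) - J G a' b' c' p4 k (x - y4))"
    have n: "0 \<le> ind x" "0 \<le> f1 x" "0 \<le> f2 x" by (simp_all add: ind_def f1_def f2_def)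
    have A0: "\<bar>dA 0\<bar> \<le> 2" and Ak: "\<And>k. k \<noteq> 0 \<Longrightarrow> \<bar>dA k\<bar> \<le> 8"
      unfolding dA_def using diff_bnds[OF G0 G1 pa] by auto
    have B0: "\<bar>dB 0\<bar> \<le> 2" and Bk: "\<And>k. k \<noteq> 0 \<Longrightarrow> \<bar>dB k\<bar> \<le> 8"
      unfolding dB_def using diff_bnds[OF G0 G1 pb] by auto
    have AL: "\<bar>dA 0\<bar> \<le> 4 * exp (- 2 * G * (y0 - x))" "\<And>k. k \<noteq> 0 \<Longrightarrow> \<bar>dA k\<bar> \<le> 16 * exp (- G * (y0 - x))"
      if "x \<le> y0"
    proof -
      note l1 = left_bnds[OF G0 G1 pa ys(1) that] and l3 = left_bnds[OF G0 G1 pa ys(2) that]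
      show "\<bar>dA 0\<bar> \<le> 4 * exp (- 2 * G * (y0 - x))" unfolding dA_def using l1(1)[of p1] l3(1)[of p3] by linarith
      fix k :: nat assume "k \<noteq> 0"
      then show "\<bar>dA k\<bar> \<le> 16 * exp (- G * (y0 - x))" unfolding dA_def using l1(2)[of k p1] l3(2)[of k p3] by linarith
    qed
    have BR: "\<bar>dB 0\<bar> \<le> 4 * exp (- 2 * G * (x + y0))" "\<And>k. k \<noteq> 0 \<Longrightarrow> \<bar>dB k\<bar> \<le> 16 * exp (- G * (x + y0))"
      if "- y0 \<le> x"
    proof -
      note r2 = right_bnds[OF G0 G1 pb ys(3) that] and r4 = right_bnds[OF G0 G1 pb ys(4) that]
      show "\<bar>dB 0\<bar> \<le> 4 * exp (- 2 * G * (x + y0))" unfolding dB_def using r2(1)[of p2] r4(1)[of p4] by linarith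
      fix k :: nat assume "k \<noteq> 0"
      then show "\<bar>dB k\<bar> \<le> 16 * exp (- G * (x + y0))" unfolding dB_def using r2(2)[of k p2] r4(2)[of k p4] by linarith
    qed
    have "\<bar>\<Sum>k<(6::nat). dA k * dB k\<bar> \<le> Gx x"
    proof -
      consider "- y0 \<le> x \<and> x \<le> y0" | "y0 < x" | "x < - y0" by linarith
      then show ?thesis
      proof cases
        case 1
        have "\<bar>\<Sum>k<(6::nat). dA k * dB k\<bar> \<le> (4 * exp (- 2 * G * (y0 - x))) * (4 * exp (- 2 * G * (x + y0)))
           + 5 * ((16 * exp (- G * (y0 - x))) * (16 * exp (- G * (x + y0))))"
          using 1 by (intro bil AL BR) auto
        also have "\<dots> = 16 * exp (- 4 * G * y0) + 1280 * E"
        proof -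
          have "exp (- 2 * G * (y0 - x)) * exp (- 2 * G * (x + y0)) = exp (- 4 * G * y0)"
            by (simp add: exp_add[symmetric] algebra_simps)
          moreover have "exp (- G * (y0 - x)) * exp (- G * (x + y0)) = E"
            by (simp add: exp_add[symmetric] algebra_simps E_def)
          ultimately show ?thesis by (simp add: algebra_simps)
        qed
        also have "\<dots> \<le> 1296 * E"
        proof -
          have "exp (- 4 * G * y0) \<le> E" unfolding E_def using G0 y0 by simp
          then show ?thesis by simp
        qed
        also have "\<dots> \<le> Gx x" unfolding Gx_def using 1 n E0 by (simp add: ind_def)
        finally show ?thesis .
      next
        case 2
        have "\<bar>\<Sum>k<(6::nat). dA k * dB k\<bar> \<le> 2 * (4 * exp (- 2 * G * (x + y0))) + 5 * (8 * (16 * exp (- G * (x + y0))))"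
          using 2 y0 by (intro bil A0 Ak BR) auto
        also have "\<dots> \<le> 648 * exp (- G * (x + y0))"
        proof -
          have "exp (- 2 * G * (x + y0)) \<le> exp (- G * (x + y0))" using 2 y0 G0 by simp
          then show ?thesis by simp
        qed
        also have "exp (- G * (x + y0)) = E * f1 x"
          using 2 by (simp add: E_def f1_def exp_add[symmetric] algebra_simps)
        also have "648 * (E * f1 x) \<le> Gx x" unfolding Gx_def using n E0 by (simp add: algebra_simps)
        finally show ?thesis .
      next
        case 3
        have "\<bar>\<Sum>k<(6::nat). dA k * dB k\<bar> \<le> (4 * exp (- 2 * G * (y0 - x))) * 2 + 5 * ((16 * exp (- G * (y0 - x))) * 8)"
          using 3 y0 by (intro bil AL B0 Bk) auto
        also have "\<dots> \<le> 648 * exp (- G * (y0 - x))"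
        proof -
          have "exp (- 2 * G * (y0 - x)) \<le> exp (- G * (y0 - x))" using 3 y0 G0 by simp
          then show ?thesis by simp
        qed
        also have "exp (- G * (y0 - x)) = E * f2 x"
          using 3 by (simp add: E_def f2_def exp_add[symmetric] algebra_simps)
        also have "648 * (E * f2 x) \<le> Gx x" unfolding Gx_def using n E0 by (simp add: algebra_simps)
        finally show ?thesis .
      qed
    qed
    then show ?thesis unfolding dA_def dB_def .
  qed
  show ?thesis using gi pw iG by blast
qed


lemmas U_cont' [continuous_intros] = U_cont dU_cont

lemma vd2: "vector_derivative (\<lambda>x. U G a b c y p x - U G a b c y' p' x) (at x) = dU G a b c y p x - dU G a b c y' p' x"
  by (rule vector_derivative_at) (intro has_vector_derivative_diff U_deriv)

lemma vd4: "vector_derivative (\<lambda>x. (U G a b c y p x - U G a b c y' p' x) + (U G a2 b2 c2 y2 p2 x - U G a2 b2 c2 y2' p2' x)) (at x)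
   = (dU G a b c y p x - dU G a b c y' p' x) + (dU G a2 b2 c2 y2 p2 x - dU G a2 b2 c2 y2' p2' x)"
  by (rule vector_derivative_at) (intro has_vector_derivative_diff has_vector_derivative_add U_deriv)

lemma Pdiff: "(\<lambda>x. P \<gamma> s2 s2' g1 g2 x - P \<gamma> s2 s2' g3 g4 x) =
  (\<lambda>x. (U (Gam \<gamma>) 1 s2 \<gamma> (fst g1) (snd g1) x - U (Gam \<gamma>) 1 s2 \<gamma> (fst g3) (snd g3) x)
     + (U (Gam \<gamma>) (-1) s2' (-\<gamma>) (fst g2) (snd g2) x - U (Gam \<gamma>) (-1) s2' (-\<gamma>) (fst g4) (snd g4) x))"
  by (rule ext) (simp add: P_def act_plus act_minus algebra_simps)

lemma norm_sum_sq: "(norm (u + v))^2 \<le> 2 * (norm u)^2 + 2 * (norm (v::'a::real_normed_vector))^2"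
proof -
  have "(norm (u + v))^2 \<le> (norm u + norm v)^2" by (intro power_mono norm_triangle_ineq) simp
  also have "\<dots> \<le> 2 * (norm u)^2 + 2 * (norm v)^2" by (rule sq_sum)
  finally show ?thesis .
qed

lemma norm_sum_eq: "(norm (u + v))^2 = (norm u)^2 + (norm (v::'a::real_inner))^2 + 2 * inner u v"
  by (simp add: power2_norm_eq_inner inner_add_left inner_add_right inner_commute)

theorem mainTheorem15:
  fixes \<gamma> s2 s2' :: real
  assumes "\<gamma> \<in> {-1<..<1}" and "s2 \<in> {-1, 1}" and "s2' \<in> {-1, 1}"
  shows "\<exists>C>0.
    (\<forall>g1 g2 g3 g4 :: real \<times> real.
       H1norm (\<lambda>x. P \<gamma> s2 s2' g1 g2 x - P \<gamma> s2 s2' g3 g4 x)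
         \<le> C * (gnorm (g1 - g3) + gnorm (g2 - g4))) \<and>
    (\<exists>ymin>0. \<forall>y0 \<ge> ymin. \<forall>g1 g2 g3 g4 :: real \<times> real.
       fst g1 \<ge> y0 \<longrightarrow> fst g3 \<ge> y0 \<longrightarrow> fst g2 \<le> - y0 \<longrightarrow> fst g4 \<le> - y0 \<longrightarrow>
       (H1norm (\<lambda>x. act g1 (w_star \<gamma> 1 s2) x - act g3 (w_star \<gamma> 1 s2) x))\<^sup>2
       + (H1norm (\<lambda>x. act g2 (w_star \<gamma> (-1) s2') x - act g4 (w_star \<gamma> (-1) s2') x))\<^sup>2
       \<le> (H1norm (\<lambda>x. P \<gamma> s2 s2' g1 g2 x - P \<gamma> s2 s2' g3 g4 x))\<^sup>2
         + C * y0 * exp (- 2 * Gam \<gamma> * y0))"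
proof -
  define \<Gamma> where "\<Gamma> = Gam \<gamma>"
  have g2: "\<gamma>^2 < 1" using assms(1) by (simp add: abs_square_less_1 abs_less_iff)
  have G0: "0 < \<Gamma>" unfolding \<Gamma>_def Gam_def using g2 by simp
  have G1: "\<Gamma> \<le> 1" unfolding \<Gamma>_def Gam_def using g2 by simp
  have ca: "\<bar>\<gamma>\<bar> \<le> 1" "\<bar>-\<gamma>\<bar> \<le> 1" using assms(1) by auto
  have sa: "\<bar>s2\<bar> = 1" "\<bar>s2'\<bar> = 1" using assms(2,3) by auto
  have one: "\<bar>1::real\<bar> = 1" "\<bar>-1::real\<bar> = 1" by simp_all
  define K where "K = 20000 / \<Gamma>"
  have K0: "0 < K" using G0 by (simp add: K_def)
  define C1 where "C1 = sqrt (2 * K)"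
  define C2 where "C2 = 2592 * (2 + 4 / \<Gamma>)"
  have C10: "0 < C1" using K0 by (simp add: C1_def)
  have C20: "0 < C2" using G0 by (simp add: C2_def add_pos_pos)
  define R where "R = range (\<lambda>k::int. 2 * pi * of_int k)"
  define Up where "Up = (\<lambda>g::real\<times>real. U \<Gamma> 1 s2 \<gamma> (fst g) (snd g))"
  define Um where "Um = (\<lambda>g::real\<times>real. U \<Gamma> (-1) s2' (-\<gamma>) (fst g) (snd g))"
  define dUp where "dUp = (\<lambda>g::real\<times>real. dU \<Gamma> 1 s2 \<gamma> (fst g) (snd g))"
  define dUm where "dUm = (\<lambda>g::real\<times>real. dU \<Gamma> (-1) s2' (-\<gamma>) (fst g) (snd g))"
  have H1P: "H1norm (\<lambda>x. P \<gamma> s2 s2' g1 g2 x - P \<gamma> s2 s2' g3 g4 x) =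
     sqrt (\<integral>x. (norm ((Up g1 x - Up g3 x) + (Um g2 x - Um g4 x)))^2
       + (norm ((dUp g1 x - dUp g3 x) + (dUm g2 x - dUm g4 x)))^2 \<partial>lborel)" for g1 g2 g3 g4
    unfolding H1norm_def Pdiff vd4 Up_def Um_def dUp_def dUm_def \<Gamma>_def ..
  have H1p: "H1norm (\<lambda>x. act g1 (w_star \<gamma> 1 s2) x - act g3 (w_star \<gamma> 1 s2) x) =
     sqrt (\<integral>x. (norm (Up g1 x - Up g3 x))^2 + (norm (dUp g1 x - dUp g3 x))^2 \<partial>lborel)" for g1 g3
    unfolding H1norm_def act_plus vd2 Up_def dUp_def \<Gamma>_def ..
  have H1m: "H1norm (\<lambda>x. act g1 (w_star \<gamma> (-1) s2') x - act g3 (w_star \<gamma> (-1) s2') x) =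
     sqrt (\<integral>x. (norm (Um g1 x - Um g3 x))^2 + (norm (dUm g1 x - dUm g3 x))^2 \<partial>lborel)" for g1 g3
    unfolding H1norm_def act_minus vd2 Um_def dUm_def \<Gamma>_def ..
  have prA: "\<exists>Gf. integrable lborel Gf \<and>
     (\<forall>x. (norm (Up g1 x - Up g3 x))^2 + (norm (dUp g1 x - dUp g3 x))^2 \<le> Gf x) \<and>
     integral\<^sup>L lborel Gf \<le> K * (gnorm (g1 - g3))^2" for g1 g3
    using part1_profile[OF G0 G1 ca(1) one(1) sa(1), of "fst g1" "snd g1" "fst g3" "snd g3"]
    unfolding Up_def dUp_def K_def gnorm_def by simp
  have prB: "\<exists>Gf. integrable lborel Gf \<and>
     (\<forall>x. (norm (Um g1 x - Um g3 x))^2 + (norm (dUm g1 x - dUm g3 x))^2 \<le> Gf x) \<and>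
     integral\<^sup>L lborel Gf \<le> K * (gnorm (g1 - g3))^2" for g1 g3
    using part1_profile[OF G0 G1 ca(2) one(2) sa(2), of "fst g1" "snd g1" "fst g3" "snd g3"]
    unfolding Um_def dUm_def K_def gnorm_def by simp
  have gn0: "0 \<le> gnorm g" for g by (simp add: gnorm_def infdist_nonneg)
  have part1: "H1norm (\<lambda>x. P \<gamma> s2 s2' g1 g2 x - P \<gamma> s2 s2' g3 g4 x)
         \<le> C1 * (gnorm (g1 - g3) + gnorm (g2 - g4))" for g1 g2 g3 g4
  proof -
    obtain GA where GA: "integrable lborel GA"
      "\<And>x. (norm (Up g1 x - Up g3 x))^2 + (norm (dUp g1 x - dUp g3 x))^2 \<le> GA x"
      "integral\<^sup>L lborel GA \<le> K * (gnorm (g1 - g3))^2" using prA[of g1 g3] by blast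
    obtain GB where GB: "integrable lborel GB"
      "\<And>x. (norm (Um g2 x - Um g4 x))^2 + (norm (dUm g2 x - dUm g4 x))^2 \<le> GB x"
      "integral\<^sup>L lborel GB \<le> K * (gnorm (g2 - g4))^2" using prB[of g2 g4] by blast
    define dA dB where "dA = gnorm (g1 - g3)" and "dB = gnorm (g2 - g4)"
    have dA0: "0 \<le> dA" and dB0: "0 \<le> dB" by (simp_all add: dA_def dB_def gn0)
    have GA0: "0 \<le> GA x" for x using GA(2)[of x] by (meson add_nonneg_nonneg order_trans zero_le_power2)
    have GB0: "0 \<le> GB x" for x using GB(2)[of x] by (meson add_nonneg_nonneg order_trans zero_le_power2)
    have "(\<integral>x. (norm ((Up g1 x - Up g3 x) + (Um g2 x - Um g4 x)))^2
       + (norm ((dUp g1 x - dUp g3 x) + (dUm g2 x - dUm g4 x)))^2 \<partial>lborel)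
       \<le> (\<integral>x. 2 * GA x + 2 * GB x \<partial>lborel)"
    proof (rule integral_mono')
      show "integrable lborel (\<lambda>x. 2 * GA x + 2 * GB x)" using GA(1) GB(1) by simp
      fix x
      show "0 \<le> 2 * GA x + 2 * GB x" using GA0[of x] GB0[of x] by simp
      have "(norm ((Up g1 x - Up g3 x) + (Um g2 x - Um g4 x)))^2
         + (norm ((dUp g1 x - dUp g3 x) + (dUm g2 x - dUm g4 x)))^2
        \<le> (2 * (norm (Up g1 x - Up g3 x))^2 + 2 * (norm (Um g2 x - Um g4 x))^2)
          + (2 * (norm (dUp g1 x - dUp g3 x))^2 + 2 * (norm (dUm g2 x - dUm g4 x))^2)"
        by (intro add_mono norm_sum_sq)
      also have "\<dots> \<le> 2 * GA x + 2 * GB x" using GA(2)[of x] GB(2)[of x] by simp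
      finally show "(norm ((Up g1 x - Up g3 x) + (Um g2 x - Um g4 x)))^2
         + (norm ((dUp g1 x - dUp g3 x) + (dUm g2 x - dUm g4 x)))^2 \<le> 2 * GA x + 2 * GB x" .
    qed
    also have "\<dots> = 2 * integral\<^sup>L lborel GA + 2 * integral\<^sup>L lborel GB" using GA(1) GB(1) by simp
    also have "\<dots> \<le> 2 * (K * dA^2) + 2 * (K * dB^2)" using GA(3) GB(3) unfolding dA_def dB_def by simp
    also have "\<dots> \<le> (2 * K) * (dA + dB)^2"
    proof -
      have "dA^2 + dB^2 \<le> (dA + dB)^2" using dA0 dB0 by (simp add: power2_sum)
      then have "K * (dA^2 + dB^2) \<le> K * (dA + dB)^2" using K0 by (intro mult_left_mono) auto
      then show ?thesis by (simp add: algebra_simps)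
    qed
    finally have I: "(\<integral>x. (norm ((Up g1 x - Up g3 x) + (Um g2 x - Um g4 x)))^2
       + (norm ((dUp g1 x - dUp g3 x) + (dUm g2 x - dUm g4 x)))^2 \<partial>lborel) \<le> (2 * K) * (dA + dB)^2" .
    have "H1norm (\<lambda>x. P \<gamma> s2 s2' g1 g2 x - P \<gamma> s2 s2' g3 g4 x) \<le> sqrt ((2 * K) * (dA + dB)^2)"
      unfolding H1P by (rule real_sqrt_le_mono[OF I])
    also have "\<dots> = C1 * (dA + dB)" using dA0 dB0 by (simp add: C1_def real_sqrt_mult)
    finally show ?thesis unfolding dA_def dB_def .
  qed
  have part2: "(H1norm (\<lambda>x. act g1 (w_star \<gamma> 1 s2) x - act g3 (w_star \<gamma> 1 s2) x))\<^sup>2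
       + (H1norm (\<lambda>x. act g2 (w_star \<gamma> (-1) s2') x - act g4 (w_star \<gamma> (-1) s2') x))\<^sup>2
       \<le> (H1norm (\<lambda>x. P \<gamma> s2 s2' g1 g2 x - P \<gamma> s2 s2' g3 g4 x))\<^sup>2
         + C2 * y0 * exp (- 2 * Gam \<gamma> * y0)"
    if y0: "1 \<le> y0" and ys: "fst g1 \<ge> y0" "fst g3 \<ge> y0" "fst g2 \<le> - y0" "fst g4 \<le> - y0" for y0 g1 g2 g3 g4
  proof -
    obtain GA where GA: "integrable lborel GA"
      "\<And>x. (norm (Up g1 x - Up g3 x))^2 + (norm (dUp g1 x - dUp g3 x))^2 \<le> GA x"
      using prA[of g1 g3] by blast
    obtain GB where GB: "integrable lborel GB"
      "\<And>x. (norm (Um g2 x - Um g4 x))^2 + (norm (dUm g2 x - dUm g4 x))^2 \<le> GB x"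
      using prB[of g2 g4] by blast
    obtain Gx where Gx: "integrable lborel Gx"
      "\<And>x. \<bar>\<Sum>k<(6::nat). (J \<Gamma> 1 s2 \<gamma> (snd g1) k (x - fst g1) - J \<Gamma> 1 s2 \<gamma> (snd g3) k (x - fst g3))
          * (J \<Gamma> (-1) s2' (-\<gamma>) (snd g2) k (x - fst g2) - J \<Gamma> (-1) s2' (-\<gamma>) (snd g4) k (x - fst g4))\<bar> \<le> Gx x"
      "integral\<^sup>L lborel Gx \<le> 1296 * exp (- 2 * \<Gamma> * y0) * (2 * y0 + 4 / \<Gamma>)"
      using cross[OF G0 G1 ca(1) one(1) sa(1) ca(2) one(2) sa(2), of y0 "fst g1" "fst g3" "fst g2" "fst g4"
          "snd g1" "snd g3" "snd g2" "snd g4"] y0 ys by auto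
    define FA where "FA = (\<lambda>x. (norm (Up g1 x - Up g3 x))^2 + (norm (dUp g1 x - dUp g3 x))^2)"
    define FB where "FB = (\<lambda>x. (norm (Um g2 x - Um g4 x))^2 + (norm (dUm g2 x - dUm g4 x))^2)"
    define X where "X = (\<lambda>x. inner (Up g1 x - Up g3 x) (Um g2 x - Um g4 x) + inner (dUp g1 x - dUp g3 x) (dUm g2 x - dUm g4 x))"
    have cA: "continuous_on UNIV FA" unfolding FA_def Up_def dUp_def by (intro continuous_intros)
    have cB: "continuous_on UNIV FB" unfolding FB_def Um_def dUm_def by (intro continuous_intros)
    have cX: "continuous_on UNIV X" unfolding X_def Up_def dUp_def Um_def dUm_def by (intro continuous_intros)
    have iA: "integrable lborel FA" using dom_int(1)[OF GA(1) cA] GA(2) unfolding FA_def by simp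
    have iB: "integrable lborel FB" using dom_int(1)[OF GB(1) cB] GB(2) unfolding FB_def by simp
    have Xb: "\<bar>X x\<bar> \<le> Gx x" for x
      using Gx(2)[of x] unfolding X_def Up_def dUp_def Um_def dUm_def X_eq by simp
    have iX: "integrable lborel X" using dom_int(1)[OF Gx(1) cX] Xb by simp
    have IX: "- integral\<^sup>L lborel X \<le> integral\<^sup>L lborel Gx"
    proof -
      have "integral\<^sup>L lborel (\<lambda>x. - X x) \<le> integral\<^sup>L lborel Gx"
        using iX Gx(1) Xb by (intro integral_mono) (auto simp: abs_le_iff)
      then show ?thesis by simp
    qed
    have Ieq: "(\<lambda>x. (norm ((Up g1 x - Up g3 x) + (Um g2 x - Um g4 x)))^2
       + (norm ((dUp g1 x - dUp g3 x) + (dUm g2 x - dUm g4 x)))^2) = (\<lambda>x. FA x + FB x + 2 * X x)"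
      by (rule ext) (simp only: FA_def FB_def X_def norm_sum_eq distrib_left add_ac inner_commute)
    have FA0: "0 \<le> integral\<^sup>L lborel FA" by (rule Bochner_Integration.integral_nonneg) (simp add: FA_def)
    have FB0: "0 \<le> integral\<^sup>L lborel FB" by (rule Bochner_Integration.integral_nonneg) (simp add: FB_def)
    have IFF: "0 \<le> integral\<^sup>L lborel (\<lambda>x. FA x + FB x + 2 * X x)"
      unfolding Ieq[symmetric] by (rule Bochner_Integration.integral_nonneg) simp
    have lhs: "(H1norm (\<lambda>x. act g1 (w_star \<gamma> 1 s2) x - act g3 (w_star \<gamma> 1 s2) x))\<^sup>2
       + (H1norm (\<lambda>x. act g2 (w_star \<gamma> (-1) s2') x - act g4 (w_star \<gamma> (-1) s2') x))\<^sup>2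
       = integral\<^sup>L lborel FA + integral\<^sup>L lborel FB"
      unfolding H1p H1m using FA0 FB0 by (simp add: FA_def FB_def)
    have rhs: "(H1norm (\<lambda>x. P \<gamma> s2 s2' g1 g2 x - P \<gamma> s2 s2' g3 g4 x))\<^sup>2
       = integral\<^sup>L lborel FA + integral\<^sup>L lborel FB + 2 * integral\<^sup>L lborel X"
    proof -
      have "(H1norm (\<lambda>x. P \<gamma> s2 s2' g1 g2 x - P \<gamma> s2 s2' g3 g4 x))\<^sup>2 = integral\<^sup>L lborel (\<lambda>x. FA x + FB x + 2 * X x)"
        unfolding H1P Ieq using IFF by simp
      also have "\<dots> = integral\<^sup>L lborel FA + integral\<^sup>L lborel FB + 2 * integral\<^sup>L lborel X"
        using iA iB iX by simp
      finally show ?thesis .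
    qed
    have "2 * integral\<^sup>L lborel Gx \<le> C2 * y0 * exp (- 2 * Gam \<gamma> * y0)"
    proof -
      define E where "E = exp (- 2 * \<Gamma> * y0)"
      have E0: "0 < E" by (simp add: E_def)
      have "2 * y0 + 4 / \<Gamma> \<le> (2 + 4 / \<Gamma>) * y0"
      proof -
        have "(4 / \<Gamma>) * 1 \<le> (4 / \<Gamma>) * y0" using y0 G0 by (intro mult_left_mono) auto
        then show ?thesis by (simp add: algebra_simps)
      qed
      then have "1296 * E * (2 * y0 + 4 / \<Gamma>) \<le> 1296 * E * ((2 + 4 / \<Gamma>) * y0)"
        using E0 by (intro mult_left_mono) auto
      then have A: "integral\<^sup>L lborel Gx \<le> 1296 * E * ((2 + 4 / \<Gamma>) * y0)" using Gx(3) unfolding E_def by linarith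
      have eqq: "2 * (1296 * E * ((2 + 4 / \<Gamma>) * y0)) = C2 * y0 * exp (- 2 * Gam \<gamma> * y0)"
        unfolding C2_def E_def \<Gamma>_def by (simp add: mult_ac)
      show ?thesis using A eqq by linarith
    qed
    then show ?thesis unfolding lhs rhs using IX by linarith
  qed
  show ?thesis
  proof (rule exI[of _ "C1 + C2"], intro conjI allI impI)
    show "0 < C1 + C2" using C10 C20 by simp
    fix g1 g2 g3 g4 :: "real \<times> real"
    have "H1norm (\<lambda>x. P \<gamma> s2 s2' g1 g2 x - P \<gamma> s2 s2' g3 g4 x) \<le> C1 * (gnorm (g1 - g3) + gnorm (g2 - g4))"
      by (rule part1)
    also have "\<dots> \<le> (C1 + C2) * (gnorm (g1 - g3) + gnorm (g2 - g4))"
      using C20 gn0[of "g1 - g3"] gn0[of "g2 - g4"] by (intro mult_right_mono) auto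
    finally show "H1norm (\<lambda>x. P \<gamma> s2 s2' g1 g2 x - P \<gamma> s2 s2' g3 g4 x) \<le> (C1 + C2) * (gnorm (g1 - g3) + gnorm (g2 - g4))" .
  next
    show "\<exists>ymin>0. \<forall>y0 \<ge> ymin. \<forall>g1 g2 g3 g4 :: real \<times> real.
       fst g1 \<ge> y0 \<longrightarrow> fst g3 \<ge> y0 \<longrightarrow> fst g2 \<le> - y0 \<longrightarrow> fst g4 \<le> - y0 \<longrightarrow>
       (H1norm (\<lambda>x. act g1 (w_star \<gamma> 1 s2) x - act g3 (w_star \<gamma> 1 s2) x))\<^sup>2
       + (H1norm (\<lambda>x. act g2 (w_star \<gamma> (-1) s2') x - act g4 (w_star \<gamma> (-1) s2') x))\<^sup>2
       \<le> (H1norm (\<lambda>x. P \<gamma> s2 s2' g1 g2 x - P \<gamma> s2 s2' g3 g4 x))\<^sup>2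
         + (C1 + C2) * y0 * exp (- 2 * Gam \<gamma> * y0)"
    proof -
      have key: "(H1norm (\<lambda>x. act g1 (w_star \<gamma> 1 s2) x - act g3 (w_star \<gamma> 1 s2) x))\<^sup>2
         + (H1norm (\<lambda>x. act g2 (w_star \<gamma> (-1) s2') x - act g4 (w_star \<gamma> (-1) s2') x))\<^sup>2
         \<le> (H1norm (\<lambda>x. P \<gamma> s2 s2' g1 g2 x - P \<gamma> s2 s2' g3 g4 x))\<^sup>2
           + (C1 + C2) * y0 * exp (- 2 * Gam \<gamma> * y0)"
        if y0: "1 \<le> y0" and ys: "fst g1 \<ge> y0" "fst g3 \<ge> y0" "fst g2 \<le> - y0" "fst g4 \<le> - y0"
        for y0 :: real and g1 g2 g3 g4 :: "real \<times> real"
      proof -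
        have "C2 * y0 * exp (- 2 * Gam \<gamma> * y0) \<le> (C1 + C2) * y0 * exp (- 2 * Gam \<gamma> * y0)"
          using C10 y0 by (intro mult_right_mono) auto
        then show ?thesis using part2[OF y0 ys] by linarith
      qed
      show ?thesis by (rule exI[of _ "1::real"], intro conjI allI impI, simp, rule key, assumption+)
    qed
  qed
qed


end
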